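(* Let $C$ and $H$ be commutative Hopf algebras over a field $k$ (with antipodes $S_C$, $S_H$) such that $(C,\rho^l,\rho^r)$ is an $H$-bicomodule Hopf algebra. Let $R:C\to C$ be a linear map and let $B$ be a Rota-Baxter co-operator on $H$. Define $\widetilde{B}:C\ltimes H\to C\ltimes H$ by $$\widetilde{B}(c\ltimes h)=R(c_{(0)[0]})\ltimes B\big(c_{(-1)}c_{(0)[1]}h\big),\qquad c\in C,\ h\in H.$$ Then $\widetilde{B}$ is a Rota-Baxter co-operator on $C\ltimes H$ if and only if $R$ is a Rota-Baxter co-operator on $C$ and, for all $c\in C$, $$R(c)_{1[0]1}\,R\big(R(c)_{1[0]2}\,S_C(R(c)_{3(0)})\big)\otimes R(c)_2\otimes R(c)_{1[1]}R(c)_{3(-1)}=R(c_{1(0)})\otimes R(c_2)\otimes B\big(S_H(c_{1(-1)})\big),$$ $$R(c)_{[0](-1)1}\,B\big(R(c)_{[0](-1)2}\,S_H(R(c)_{[1]})\big)\otimes R(c)_{[0](0)}=B\big(S_H(c_{[1]})\big)\otimes R(c_{[0]}).$$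
   Context: Sweedler notation: $\Delta(c)=c_1\otimes c_2$ (iterated $c_1\otimes c_2\otimes c_3\otimes\cdots$), left coaction $\rho^l(c)=c_{(-1)}\otimes c_{(0)}\in H\otimes C$, right coaction $\rho^r(c)=c_{[0]}\otimes c_{[1]}\in C\otimes H$; subscripts compose left to right, e.g. $R(c)_{1[0]2}$ means: take $R(c)_1$ from $\Delta^{(2)}(R(c))=R(c)_1\otimes R(c)_2\otimes R(c)_3$, apply $\rho^r$ to get $R(c)_{1[0]}\otimes R(c)_{1[1]}$, then apply $\Delta$ to $R(c)_{1[0]}$ to get $R(c)_{1[0]1}\otimes R(c)_{1[0]2}$. A Rota-Baxter co-operator on a commutative Hopf algebra $(H,S)$ is an algebra map $B:H\to H$ with $B(x_1)\otimes B(x_2)=B(x)_1B\big(B(x)_2S(B(x)_4)\big)\otimes B(x)_3$ for all $x$. $C$ is an $H$-bicomodule Hopf algebra if $C$ is an $H$-bicomodule via $\rho^l,\rho^r$ (so $(\mathrm{id}\otimes\rho^r)\rho^l=(\rho^l\otimes\mathrm{id})\rho^r$) such that $\rho^l,\rho^r$ are algebra maps ($(ab)_{(-1)}\otimes(ab)_{(0)}=a_{(-1)}b_{(-1)}\otimes a_{(0)}b_{(0)}$, $(ab)_{[0]}\otimes(ab)_{[1]}=a_{[0]}b_{[0]}\otimes a_{[1]}b_{[1]}$, $\rho^l(1)=1\otimes1$, $\rho^r(1)=1\otimes 1$), $c_{(-1)}\otimes c_{(0)1}\otimes c_{(0)2}=c_{1(-1)}c_{2(-1)}\otimes c_{1(0)}\otimes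 c_{2(0)}$, $c_{[0]1}\otimes c_{[0]2}\otimes c_{[1]}=c_{1[0]}\otimes c_{2[0]}\otimes c_{1[1]}c_{2[1]}$, $\varepsilon(c_{(0)})c_{(-1)}=\varepsilon(c)1_H=\varepsilon(c_{[0]})c_{[1]}$, and $S_C$ is $H$-bicolinear. The L-R smash coproduct $C\ltimes H$ is $C\otimes H$ (elements $c\ltimes h$) with the tensor product algebra structure $(c\ltimes g)(d\ltimes h)=cd\ltimes gh$, unit $1_C\ltimes 1_H$, comultiplication $\Delta(c\ltimes h)=(c_{1[0]}\ltimes c_{2(-1)}h_1)\otimes(c_{2(0)}\ltimes h_2c_{1[1]})$, counit $\varepsilon(c)\varepsilon(h)$, antipode $S(c\ltimes h)=S_C(c_{(0)[0]})\ltimes S_H(c_{(-1)}c_{(0)[1]}h)$; for commutative $H$ this is a Hopf algebra (commutative when $C,H$ are). *)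

theory Defs
  imports "HOL-Library.Poly_Mapping"
begin

text \<open>Vector spaces over a field k are modelled as free vector spaces
  (basis functions of finite support) on a basis type 'a (every vector space has a basis).
  Then V('a) \<otimes> V('b) = V('a \<times> 'b).  Linear maps V('a) \<rightarrow> V('b) are given by
  their values on basis elements ('a \<Rightarrow> V('b)) and extended linearly by lin.
  Sweedler-notation expressions are evaluated by applying the structure maps
  and the basis-level formula, extended linearly (nested lin).\<close>

type_synonym ('a,'k) vec = "'a \<Rightarrow>\<^sub>0 'k"

definition scal :: "'k::field \<Rightarrow> ('a,'k) vec \<Rightarrow> ('a,'k) vec" where
  "scal c v = Poly_Mapping.map (\<lambda>x. c * x) v"

definition bas :: "'a \<Rightarrow> ('a,'k::field) vec" where
  "bas a = Poly_Mapping.single a 1"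

definition lin :: "('a \<Rightarrow> ('b,'k::field) vec) \<Rightarrow> ('a,'k) vec \<Rightarrow> ('b,'k) vec" where
  "lin f v = (\<Sum>a\<in>Poly_Mapping.keys v. scal (Poly_Mapping.lookup v a) (f a))"

definition lfun :: "('a \<Rightarrow> 'k::field) \<Rightarrow> ('a,'k) vec \<Rightarrow> 'k" where
  "lfun f v = (\<Sum>a\<in>Poly_Mapping.keys v. Poly_Mapping.lookup v a * f a)"

definition tens :: "('a,'k::field) vec \<Rightarrow> ('b,'k) vec \<Rightarrow> ('a \<times> 'b,'k) vec" where
  "tens v w = lin (\<lambda>a. lin (\<lambda>b. bas (a,b)) w) v"

record (overloaded) ('b,'k) hopf =
  hmult :: "'b \<Rightarrow> 'b \<Rightarrow> ('b,'k) vec"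
  hone :: "('b,'k) vec"
  hcomult :: "'b \<Rightarrow> ('b \<times> 'b,'k) vec"
  hcounit :: "'b \<Rightarrow> 'k"
  hantipode :: "'b \<Rightarrow> ('b,'k) vec"

definition mulv :: "('b,'k::field) hopf \<Rightarrow> ('b,'k) vec \<Rightarrow> ('b,'k) vec \<Rightarrow> ('b,'k) vec" where
  "mulv H x y = lin (\<lambda>a. lin (\<lambda>b. hmult H a b) y) x"

definition comv :: "('b,'k::field) hopf \<Rightarrow> ('b,'k) vec \<Rightarrow> ('b \<times> 'b,'k) vec" where
  "comv H x = lin (hcomult H) x"

definition cou :: "('b,'k::field) hopf \<Rightarrow> ('b,'k) vec \<Rightarrow> 'k" where
  "cou H x = lfun (hcounit H) x"

definition antv :: "('b,'k::field) hopf \<Rightarrow> ('b,'k) vec \<Rightarrow> ('b,'k) vec" where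
  "antv H x = lin (hantipode H) x"

definition com2 :: "('b,'k::field) hopf \<Rightarrow> ('b,'k) vec \<Rightarrow> ('b \<times> 'b \<times> 'b,'k) vec" where
  "com2 H x = lin (\<lambda>(a,b). lin (\<lambda>(b1,b2). bas (a,(b1,b2))) (hcomult H b)) (comv H x)"

definition com3 :: "('b,'k::field) hopf \<Rightarrow> ('b,'k) vec \<Rightarrow> ('b \<times> 'b \<times> 'b \<times> 'b,'k) vec" where
  "com3 H x = lin (\<lambda>(a,b). lin (\<lambda>(b1,(b2,b3)). bas (a,(b1,(b2,b3)))) (com2 H (bas b))) (comv H x)"

definition tprod :: "('a,'k::field) hopf \<Rightarrow> ('b,'k) hopf \<Rightarrow> ('a \<times> 'b,'k) vec \<Rightarrow> ('a \<times> 'b,'k) vec \<Rightarrow> ('a \<times> 'b,'k) vec" where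
  "tprod H K x y = lin (\<lambda>(a,b). lin (\<lambda>(c,d). tens (hmult H a c) (hmult K b d)) y) x"

definition is_hopf :: "('b,'k::field) hopf \<Rightarrow> bool" where
  "is_hopf H \<longleftrightarrow>
     (\<forall>x y z. mulv H (mulv H x y) z = mulv H x (mulv H y z)) \<and>
     (\<forall>x. mulv H (hone H) x = x \<and> mulv H x (hone H) = x) \<and>
     (\<forall>x. lin (\<lambda>(a,b). lin (\<lambda>(a1,a2). bas (a1,(a2,b))) (hcomult H a)) (comv H x) = com2 H x) \<and>
     (\<forall>x. lin (\<lambda>(a,b). scal (hcounit H a) (bas b)) (comv H x) = x \<and>
          lin (\<lambda>(a,b). scal (hcounit H b) (bas a)) (comv H x) = x) \<and>
     (\<forall>x y. comv H (mulv H x y) = tprod H H (comv H x) (comv H y)) \<and>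
     comv H (hone H) = tens (hone H) (hone H) \<and>
     (\<forall>x y. cou H (mulv H x y) = cou H x * cou H y) \<and> cou H (hone H) = 1 \<and>
     (\<forall>x. lin (\<lambda>(a,b). mulv H (hantipode H a) (bas b)) (comv H x) = scal (cou H x) (hone H) \<and>
          lin (\<lambda>(a,b). mulv H (bas a) (hantipode H b)) (comv H x) = scal (cou H x) (hone H))"

definition comm_hopf :: "('b,'k::field) hopf \<Rightarrow> bool" where
  "comm_hopf H \<longleftrightarrow> is_hopf H \<and> (\<forall>x y. mulv H x y = mulv H y x)"

definition bicomod_hopf :: "('h,'k::field) hopf \<Rightarrow> ('c,'k) hopf \<Rightarrow>
    ('c \<Rightarrow> ('h \<times> 'c,'k) vec) \<Rightarrow> ('c \<Rightarrow> ('c \<times> 'h,'k) vec) \<Rightarrow> bool" where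
  "bicomod_hopf H C rl rr \<longleftrightarrow>
     \<comment> \<open>left comodule\<close>
     (\<forall>x. lin (\<lambda>(h,c). lin (\<lambda>(h',c'). bas (h,(h',c'))) (rl c)) (lin rl x) =
          lin (\<lambda>(h,c). lin (\<lambda>(h1,h2). bas (h1,(h2,c))) (hcomult H h)) (lin rl x)) \<and>
     (\<forall>x. lin (\<lambda>(h,c). scal (hcounit H h) (bas c)) (lin rl x) = x) \<and>
     \<comment> \<open>right comodule\<close>
     (\<forall>x. lin (\<lambda>(c,h). lin (\<lambda>(c',h'). bas (c',(h',h))) (rr c)) (lin rr x) =
          lin (\<lambda>(c,h). lin (\<lambda>(h1,h2). bas (c,(h1,h2))) (hcomult H h)) (lin rr x)) \<and>
     (\<forall>x. lin (\<lambda>(c,h). scal (hcounit H h) (bas c)) (lin rr x) = x) \<and>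
     \<comment> \<open>bicomodule compatibility\<close>
     (\<forall>x. lin (\<lambda>(h,c). lin (\<lambda>(c',h'). bas (h,(c',h'))) (rr c)) (lin rl x) =
          lin (\<lambda>(c,h). lin (\<lambda>(h',c'). bas (h',(c',h))) (rl c)) (lin rr x)) \<and>
     \<comment> \<open>coactions are algebra maps\<close>
     (\<forall>x y. lin rl (mulv C x y) = tprod H C (lin rl x) (lin rl y)) \<and>
     lin rl (hone C) = tens (hone H) (hone C) \<and>
     (\<forall>x y. lin rr (mulv C x y) = tprod C H (lin rr x) (lin rr y)) \<and>
     lin rr (hone C) = tens (hone C) (hone H) \<and>
     \<comment> \<open>compatibility with comultiplication\<close>
     (\<forall>x. lin (\<lambda>(h,c). lin (\<lambda>(c1,c2). bas (h,(c1,c2))) (hcomult C c)) (lin rl x) =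
          lin (\<lambda>(a,b). lin (\<lambda>(h,c). lin (\<lambda>(h',c'). tens (hmult H h h') (bas (c,c'))) (rl b)) (rl a)) (comv C x)) \<and>
     (\<forall>x. lin (\<lambda>(c,h). lin (\<lambda>(c1,c2). bas (c1,(c2,h))) (hcomult C c)) (lin rr x) =
          lin (\<lambda>(a,b). lin (\<lambda>(c,h). lin (\<lambda>(c',h'). tens (bas c) (tens (bas c') (hmult H h h'))) (rr b)) (rr a)) (comv C x)) \<and>
     \<comment> \<open>compatibility with counit\<close>
     (\<forall>x. lin (\<lambda>(h,c). scal (hcounit C c) (bas h)) (lin rl x) = scal (cou C x) (hone H)) \<and>
     (\<forall>x. lin (\<lambda>(c,h). scal (hcounit C c) (bas h)) (lin rr x) = scal (cou C x) (hone H)) \<and>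
     \<comment> \<open>S_C is H-bicolinear\<close>
     (\<forall>x. lin rl (antv C x) = lin (\<lambda>(h,c). tens (bas h) (hantipode C c)) (lin rl x)) \<and>
     (\<forall>x. lin rr (antv C x) = lin (\<lambda>(c,h). tens (hantipode C c) (bas h)) (lin rr x))"

definition smash :: "('h,'k::field) hopf \<Rightarrow> ('c,'k) hopf \<Rightarrow>
    ('c \<Rightarrow> ('h \<times> 'c,'k) vec) \<Rightarrow> ('c \<Rightarrow> ('c \<times> 'h,'k) vec) \<Rightarrow> ('c \<times> 'h,'k) hopf" where
  "smash H C rl rr =
    \<lparr> hmult = (\<lambda>(c,g) (d,h). tens (hmult C c d) (hmult H g h)),
      hone = tens (hone C) (hone H),
      hcomult = (\<lambda>(c,h). lin (\<lambda>(a,b). lin (\<lambda>(a0,a1). lin (\<lambda>(bm,b0). lin (\<lambda>(h1,h2).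
                   tens (tens (bas a0) (hmult H bm h1)) (tens (bas b0) (hmult H h2 a1)))
                 (hcomult H h)) (rl b)) (rr a)) (hcomult C c)),
      hcounit = (\<lambda>(c,h). hcounit C c * hcounit H h),
      hantipode = (\<lambda>(c,h). lin (\<lambda>(m,c0). lin (\<lambda>(c00,c01).
                   tens (hantipode C c00) (antv H (mulv H (mulv H (bas m) (bas c01)) (bas h))))
                 (rr c0)) (rl c)) \<rparr>"

definition rb_coop :: "('b,'k::field) hopf \<Rightarrow> ('b \<Rightarrow> ('b,'k) vec) \<Rightarrow> bool" where
  "rb_coop H B \<longleftrightarrow>
     (\<forall>x y. lin B (mulv H x y) = mulv H (lin B x) (lin B y)) \<and> lin B (hone H) = hone H \<and>
     (\<forall>x. lin (\<lambda>(a,b). tens (B a) (B b)) (comv H x) =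
          lin (\<lambda>(a,(b,(c,d))). tens (mulv H (bas a) (lin B (mulv H (bas b) (hantipode H d)))) (bas c))
              (com3 H (lin B x)))"

definition Btilde :: "('h,'k::field) hopf \<Rightarrow> ('c \<Rightarrow> ('h \<times> 'c,'k) vec) \<Rightarrow> ('c \<Rightarrow> ('c \<times> 'h,'k) vec) \<Rightarrow>
    ('c \<Rightarrow> ('c,'k) vec) \<Rightarrow> ('h \<Rightarrow> ('h,'k) vec) \<Rightarrow> ('c \<times> 'h) \<Rightarrow> ('c \<times> 'h,'k) vec" where
  "Btilde H rl rr R B = (\<lambda>(c,h). lin (\<lambda>(m,c0). lin (\<lambda>(c00,c01).
       tens (R c00) (lin B (mulv H (mulv H (bas m) (bas c01)) (bas h)))) (rr c0)) (rl c))"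

definition cond1 :: "('h,'k::field) hopf \<Rightarrow> ('c,'k) hopf \<Rightarrow> ('c \<Rightarrow> ('h \<times> 'c,'k) vec) \<Rightarrow> ('c \<Rightarrow> ('c \<times> 'h,'k) vec) \<Rightarrow>
    ('c \<Rightarrow> ('c,'k) vec) \<Rightarrow> ('h \<Rightarrow> ('h,'k) vec) \<Rightarrow> ('c,'k) vec \<Rightarrow> bool" where
  "cond1 H C rl rr R B c \<longleftrightarrow>
     lin (\<lambda>(p,(q,r)). lin (\<lambda>(p0,p1). lin (\<lambda>(a,b). lin (\<lambda>(s,t).
           tens (mulv C (bas a) (lin R (mulv C (bas b) (hantipode C t)))) (tens (bas q) (hmult H p1 s)))
         (rl r)) (hcomult C p0)) (rr p)) (com2 C (lin R c))
   = lin (\<lambda>(a,b). lin (\<lambda>(s,t). tens (R t) (tens (R b) (lin B (hantipode H s)))) (rl a)) (comv C c)"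

definition cond2 :: "('h,'k::field) hopf \<Rightarrow> ('c \<Rightarrow> ('h \<times> 'c,'k) vec) \<Rightarrow> ('c \<Rightarrow> ('c \<times> 'h,'k) vec) \<Rightarrow>
    ('c \<Rightarrow> ('c,'k) vec) \<Rightarrow> ('h \<Rightarrow> ('h,'k) vec) \<Rightarrow> ('c,'k) vec \<Rightarrow> bool" where
  "cond2 H rl rr R B c \<longleftrightarrow>
     lin (\<lambda>(p,q). lin (\<lambda>(s,t). lin (\<lambda>(a,b).
           tens (mulv H (bas a) (lin B (mulv H (bas b) (hantipode H q)))) (bas t))
         (hcomult H s)) (rl p)) (lin rr (lin R c))
   = lin (\<lambda>(p,q). tens (lin B (hantipode H q)) (R p)) (lin rr c)"

end

theory Submission
  imports Defs
begin


lemma lookup_scal[simp]: "Poly_Mapping.lookup (scal c v) a = c * Poly_Mapping.lookup v a"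
  unfolding scal_def by transfer (simp add: when_def)

lemma scal_0[simp]: "scal 0 v = 0" by (rule poly_mapping_eqI) simp
lemma scal_v0[simp]: "scal c 0 = 0" by (rule poly_mapping_eqI) simp
lemma scal_1[simp]: "scal 1 v = v" by (rule poly_mapping_eqI) simp
lemma scal_add: "scal c (v + w) = scal c v + scal c w"
  by (rule poly_mapping_eqI) (simp add: lookup_add distrib_left)
lemma scal_add2: "scal (c + d) v = scal c v + scal d v"
  by (rule poly_mapping_eqI) (simp add: lookup_add distrib_right)
lemma scal_scal[simp]: "scal c (scal d v) = scal (c * d) v"
  by (rule poly_mapping_eqI) simp
lemma scal_sum: "scal c (sum f S) = (\<Sum>a\<in>S. scal c (f a))"
  by (induction S rule: infinite_finite_induct) (auto simp: scal_add)

lemma lin_superset: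
  assumes "finite S" "Poly_Mapping.keys v \<subseteq> S"
  shows "lin f v = (\<Sum>a\<in>S. scal (Poly_Mapping.lookup v a) (f a))"
  unfolding lin_def
  by (rule sum.mono_neutral_left) (use assms in \<open>auto simp: in_keys_iff\<close>)

lemma lin_add: "lin f (v + w) = lin f v + lin f w"
proof -
  let ?S = "Poly_Mapping.keys v \<union> Poly_Mapping.keys w"
  have "lin f (v + w) = (\<Sum>a\<in>?S. scal (Poly_Mapping.lookup (v+w) a) (f a))"
    by (rule lin_superset) (auto simp: keys_add)
  also have "\<dots> = (\<Sum>a\<in>?S. scal (Poly_Mapping.lookup v a) (f a)) + (\<Sum>a\<in>?S. scal (Poly_Mapping.lookup w a) (f a))"
    by (simp add: lookup_add scal_add2 sum.distrib)
  also have "\<dots> = lin f v + lin f w"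
    by (subst (1 2) lin_superset[where S="?S"]) auto
  finally show ?thesis .
qed

lemma keys_scal: "Poly_Mapping.keys (scal c v) \<subseteq> Poly_Mapping.keys v"
  by (auto simp: in_keys_iff)

lemma lin_scal: "lin f (scal c v) = scal c (lin f v)"
  by (subst (1 2) lin_superset[where S="Poly_Mapping.keys v"]) (auto simp: keys_scal scal_sum)

lemma lin_zero[simp]: "lin f 0 = 0" by (simp add: lin_def)

lemma lin_sum: "lin f (sum g S) = (\<Sum>i\<in>S. lin f (g i))"
  by (induction S rule: infinite_finite_induct) (auto simp: lin_add)

lemma lin_bas[simp]: "lin f (bas a) = f a"
  by (simp add: lin_def bas_def)

lemma lin_lin: "lin g (lin f v) = lin (\<lambda>a. lin g (f a)) v"
  by (simp add: lin_def[of f] lin_sum lin_scal) (simp add: lin_def)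

lemma lin_fadd: "lin (\<lambda>a. f a + g a) v = lin f v + lin g v"
  by (simp add: lin_def scal_add sum.distrib)

lemma lin_fscal: "lin (\<lambda>a. scal c (f a)) v = scal c (lin f v)"
  by (simp add: lin_def scal_sum mult.commute)

lemma lin_f0[simp]: "lin (\<lambda>a. 0) v = 0"
  by (simp add: lin_def)

lemma lin_cong: "(\<And>a. a \<in> Poly_Mapping.keys v \<Longrightarrow> f a = g a) \<Longrightarrow> lin f v = lin g v"
  by (simp add: lin_def)

lemma lin_bas_id[simp]: "lin bas v = v"
proof (rule poly_mapping_eqI)
  fix b
  have "Poly_Mapping.lookup (lin bas v) b = (\<Sum>a\<in>Poly_Mapping.keys v. Poly_Mapping.lookup v a * (if a = b then 1 else 0))"
    by (simp add: lin_def lookup_sum bas_def lookup_single when_def eq_commute)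
  also have "\<dots> = Poly_Mapping.lookup v b"
    by (simp add: if_distrib sum.delta in_keys_iff cong: if_cong)
  finally show "Poly_Mapping.lookup (lin bas v) b = Poly_Mapping.lookup v b" .
qed

lemma lin_bas_id'[simp]: "lin (\<lambda>a. bas a) v = v" by simp

lemma lin_swap: "lin (\<lambda>a. lin (\<lambda>b. F a b) w) v = lin (\<lambda>b. lin (\<lambda>a. F a b) v) w"
  by (simp add: lin_def lin_sum lin_scal scal_sum sum.swap[of _ "Poly_Mapping.keys v"])
    (simp add: mult.commute)

lemma tens_bas[simp]: "tens (bas a) (bas b) = bas (a,b)"
  by (simp add: tens_def)

lemma lin_tens: "lin F (tens v w) = lin (\<lambda>a. lin (\<lambda>b. F (a,b)) w) v"
  by (simp add: tens_def lin_lin)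

lemma tens_lin1: "tens (lin f v) w = lin (\<lambda>a. tens (f a) w) v"
  by (simp add: tens_def lin_lin)

lemma tens_lin2: "tens v (lin f w) = lin (\<lambda>b. tens v (f b)) w"
  by (simp add: tens_def lin_lin) (subst lin_swap, simp)

lemma lfun_bas[simp]: "lfun f (bas a) = f a"
  by (simp add: lfun_def bas_def)

lemma lin_fscal2: "lin (\<lambda>(x,y). scal c (F x y)) v = scal c (lin (\<lambda>(x,y). F x y) v)"
  using lin_fscal[of c "\<lambda>p. F (fst p) (snd p)" v] by (simp add: split_def)

lemma scal_sum2: "scal (sum g S) w = (\<Sum>a\<in>S. scal (g a) w)"
  by (induction S rule: infinite_finite_induct) (auto simp: scal_add2)

lemma lin_scal_lfun: "lin (\<lambda>c. scal (f c) w) v = scal (lfun f v) w"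
  by (simp add: lin_def lfun_def scal_sum2)

lemma lin_swap2: "lin (\<lambda>(a1,a2). lin (\<lambda>(b1,b2). F a1 a2 b1 b2) w) v = lin (\<lambda>(b1,b2). lin (\<lambda>(a1,a2). F a1 a2 b1 b2) v) w"
  using lin_swap[of "\<lambda>p q. F (fst p) (snd p) (fst q) (snd q)" w v] by (simp add: split_def)

lemma tens_lin12: "tens (lin f u) (lin g v) = lin (\<lambda>a. lin (\<lambda>b. tens (f a) (g b)) v) u"
  by (subst tens_lin1) (simp only: tens_lin2)


locale calg =
  fixes mul :: "('a,'k::field) vec \<Rightarrow> ('a,'k) vec \<Rightarrow> ('a,'k) vec" and one :: "('a,'k) vec"
  assumes mul_add: "mul (x + y) z = mul x z + mul y z"
    and mul_scal: "mul (scal c x) y = scal c (mul x y)"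
    and assoc: "mul (mul x y) z = mul x (mul y z)"
    and comm: "mul x y = mul y x"
    and one_l: "mul one x = x"
begin
lemma mul_0[simp]: "mul 0 x = 0" using mul_scal[of 0 0 x] by simp
lemma mul_sum: "mul (sum f S) w = (\<Sum>a\<in>S. mul (f a) w)"
  by (induction S rule: infinite_finite_induct) (auto simp: mul_add)
lemma mul_lin: "mul (lin f v) w = lin (\<lambda>a. mul (f a) w) v"
  by (simp add: lin_def mul_sum mul_scal)
lemma mul_lin2: "mul w (lin f v) = lin (\<lambda>a. mul w (f a)) v"
  using mul_lin[of f v w] by (simp add: comm)
lemma mul_lin12: "mul (lin f u) (lin g v) = lin (\<lambda>a. lin (\<lambda>b. mul (f a) (g b)) v) u"
  by (subst mul_lin) (simp only: mul_lin2)
lemma lin_pair_tens: "lin (\<lambda>(x,y). mul (p x) (q y)) (tens u v) = mul (lin p u) (lin q v)"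
  by (simp add: lin_tens mul_lin12)
lemma lin_pair_tens': "lin (\<lambda>z. mul (p (fst z)) (q (snd z))) (tens u v) = mul (lin p u) (lin q v)"
  using lin_pair_tens[of p q u v] by (simp add: split_def)
lemma lin_triple_tens: "lin (\<lambda>(u,v,w). mul (x u) (mul (y v) (h w))) (tens U (tens V W)) = mul (lin x U) (mul (lin y V) (lin h W))"
  by (simp add: lin_tens, simp only: mul_lin, simp only: mul_lin2)
lemma lin_triple_tens': "lin (\<lambda>z. mul (x (fst z)) (mul (y (fst (snd z))) (h (snd (snd z))))) (tens U (tens V W)) = mul (lin x U) (mul (lin y V) (lin h W))"
  using lin_triple_tens[of x y h U V W] by (simp add: split_def)
lemma lin_mul_bas: "lin (\<lambda>b. mul u (bas b)) v = mul u v"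
  using mul_lin2[of u bas v] by simp
lemma lin_mul_bas1: "lin (\<lambda>b. mul (bas b) u) v = mul v u"
  using mul_lin[of bas v u] by simp
lemma one_r: "mul x one = x" using one_l comm by metis
lemma lcomm: "mul x (mul y z) = mul y (mul x z)"
  by (metis assoc comm)
lemmas ac = assoc comm lcomm
lemma mul_0r[simp]: "mul x 0 = 0" using mul_0 comm by metis
lemma mul_scal2: "mul y (scal c x) = scal c (mul y x)"
  using mul_scal comm by metis
end

lemma calg_mulv: assumes "comm_hopf X" shows "calg (mulv X) (hone X)"
proof
  note A = assms[unfolded comm_hopf_def is_hopf_def]
  show "mulv X (x + y) z = mulv X x z + mulv X y z" for x y z by (simp add: mulv_def lin_add)
  show "mulv X (scal c x) y = scal c (mulv X x y)" for c x y by (simp add: mulv_def lin_scal)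
  show "mulv X (mulv X x y) z = mulv X x (mulv X y z)" for x y z using A by blast
  show "mulv X x y = mulv X y x" for x y using A by blast
  show "mulv X (hone X) x = x" for x using A by blast
qed

definition tens_alg where
  "tens_alg m1 m2 u v = lin (\<lambda>(a,b). lin (\<lambda>(c,d). tens (m1 (bas a) (bas c)) (m2 (bas b) (bas d))) v) u"

lemma tprod_tens_alg: "tprod X Y = tens_alg (mulv X) (mulv Y)"
  by (simp add: fun_eq_iff tprod_def tens_alg_def mulv_def)

lemma tens_alg_lin1: "tens_alg m1 m2 (lin f u) v = lin (\<lambda>a. tens_alg m1 m2 (f a) v) u"
  by (simp add: tens_alg_def lin_lin)

lemma tens_alg_lin2: "tens_alg m1 m2 u (lin f v) = lin (\<lambda>a. tens_alg m1 m2 u (f a)) v"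
  unfolding tens_alg_def by (simp add: lin_lin split_def) (rule lin_swap)

lemma tens_alg_basis: "tens_alg m1 m2 x y = lin (\<lambda>p. lin (\<lambda>q. tens_alg m1 m2 (bas p) (bas q)) y) x"
proof -
  have h: "tens_alg m1 m2 u y = lin (\<lambda>q. tens_alg m1 m2 u (bas q)) y" for u
    using tens_alg_lin2[of m1 m2 u bas y] by simp
  have "tens_alg m1 m2 x y = lin (\<lambda>p. tens_alg m1 m2 (bas p) y) x"
    using tens_alg_lin1[of m1 m2 bas x y] by simp
  then show ?thesis by (simp only: h)
qed

lemma tens_alg_bas: "tens_alg m1 m2 (bas (a,b)) (bas (c,d)) = tens (m1 (bas a) (bas c)) (m2 (bas b) (bas d))"
  by (simp add: tens_alg_def)

context
  fixes m1 :: "('a,'k::field) vec \<Rightarrow> ('a,'k) vec \<Rightarrow> ('a,'k) vec" and o1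
    and m2 :: "('b,'k::field) vec \<Rightarrow> ('b,'k) vec \<Rightarrow> ('b,'k) vec" and o2
  assumes A1: "calg m1 o1" and A2: "calg m2 o2"
begin

lemma tens_alg_tens: "tens_alg m1 m2 (tens u1 u2) (tens v1 v2) = tens (m1 u1 v1) (m2 u2 v2)"
proof -
  have e1: "m1 u1 v1 = lin (\<lambda>a. lin (\<lambda>c. m1 (bas a) (bas c)) v1) u1"
    proof -
    have "m1 u1 v1 = m1 (lin bas u1) (lin bas v1)" by simp
    also have "\<dots> = lin (\<lambda>a. lin (\<lambda>c. m1 (bas a) (bas c)) v1) u1"
      by (simp only: calg.mul_lin[OF A1] calg.mul_lin2[OF A1]) (rule lin_swap)
    finally show ?thesis .
  qed
  have e2: "m2 u2 v2 = lin (\<lambda>a. lin (\<lambda>c. m2 (bas a) (bas c)) v2) u2"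
    proof -
    have "m2 u2 v2 = m2 (lin bas u2) (lin bas v2)" by simp
    also have "\<dots> = lin (\<lambda>a. lin (\<lambda>c. m2 (bas a) (bas c)) v2) u2"
      by (simp only: calg.mul_lin[OF A2] calg.mul_lin2[OF A2]) (rule lin_swap)
    finally show ?thesis .
  qed
  have "tens (m1 u1 v1) (m2 u2 v2) = lin (\<lambda>a. lin (\<lambda>b. lin (\<lambda>c. lin (\<lambda>d.
      tens (m1 (bas a) (bas c)) (m2 (bas b) (bas d))) v2) v1) u2) u1"
    unfolding e1 e2 by (simp only: tens_lin12)
  also have "\<dots> = tens_alg m1 m2 (tens u1 u2) (tens v1 v2)"
    unfolding tens_alg_def by (simp add: lin_tens)
  finally show ?thesis by simp
qed

lemma calg_tens_alg: "calg (tens_alg m1 m2) (tens o1 o2)"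
proof
  show "tens_alg m1 m2 (x + y) z = tens_alg m1 m2 x z + tens_alg m1 m2 y z" for x y z
    by (simp add: tens_alg_def lin_add)
  show "tens_alg m1 m2 (scal c x) y = scal c (tens_alg m1 m2 x y)" for c x y
    by (simp add: tens_alg_def lin_scal)
  show "tens_alg m1 m2 (tens_alg m1 m2 x y) z = tens_alg m1 m2 x (tens_alg m1 m2 y z)" for x y z
  proof -
    have "tens_alg m1 m2 (tens_alg m1 m2 (bas p) (bas q)) (bas r) = tens_alg m1 m2 (bas p) (tens_alg m1 m2 (bas q) (bas r))" for p q r
    proof -
      obtain a b where p: "p = (a,b)" by fastforce
      obtain c d where q: "q = (c,d)" by fastforce
      obtain e f where r: "r = (e,f)" by fastforce
      show ?thesis unfolding p q r
        by (simp only: tens_bas[symmetric] tens_alg_tens calg.assoc[OF A1] calg.assoc[OF A2])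
    qed
    then show ?thesis
      by (subst (1 2) lin_bas_id[symmetric, of x], subst (1 2) lin_bas_id[symmetric, of y],
          subst (1 2) lin_bas_id[symmetric, of z])
        (simp only: tens_alg_lin1 tens_alg_lin2 lin_lin lin_bas)
  qed
  show "tens_alg m1 m2 x y = tens_alg m1 m2 y x" for x y
  proof -
    have "tens_alg m1 m2 (bas p) (bas q) = tens_alg m1 m2 (bas q) (bas p)" for p q
      by (cases p; cases q) (simp only: tens_alg_bas, metis calg.comm A1 A2)
    note c = this
    show ?thesis
      by (subst (1 2) tens_alg_basis) (subst lin_swap, simp only: c)
  qed
  show "tens_alg m1 m2 (tens o1 o2) x = x" for x
  proof -
    have "tens_alg m1 m2 (tens o1 o2) (bas p) = bas p" for p
    proof -
      obtain a b where p: "p = (a,b)" by fastforce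
      show ?thesis unfolding p
        by (simp only: tens_bas[symmetric] tens_alg_tens calg.one_l[OF A1] calg.one_l[OF A2])
    qed
    then show ?thesis
      by (subst (1 2) lin_bas_id[symmetric, of x]) (simp only: tens_alg_lin2 lin_bas)
  qed
qed
end


locale chopf =
  fixes X :: "('b,'k::field) hopf"
  assumes CH: "comm_hopf X"
begin

lemma ax_assoc: "mulv X (mulv X x y) z = mulv X x (mulv X y z)" using CH unfolding comm_hopf_def is_hopf_def by blast
lemma ax_unit: "mulv X (hone X) x = x" "mulv X x (hone X) = x" using CH unfolding comm_hopf_def is_hopf_def by blast+
lemma ax_comm: "mulv X x y = mulv X y x" using CH unfolding comm_hopf_def by blast
lemma ax_coassoc: "lin (\<lambda>(a,b). lin (\<lambda>(a1,a2). bas (a1,(a2,b))) (hcomult X a)) (comv X x) = com2 X x"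
  using CH unfolding comm_hopf_def is_hopf_def by blast
lemma ax_counit: "lin (\<lambda>(a,b). scal (hcounit X a) (bas b)) (comv X x) = x"
   "lin (\<lambda>(a,b). scal (hcounit X b) (bas a)) (comv X x) = x"
  using CH unfolding comm_hopf_def is_hopf_def by blast+
lemma ax_comult: "comv X (mulv X x y) = tprod X X (comv X x) (comv X y)"
  using CH unfolding comm_hopf_def is_hopf_def by blast
lemma ax_comult1: "comv X (hone X) = tens (hone X) (hone X)"
  using CH unfolding comm_hopf_def is_hopf_def by blast
lemma ax_cou: "cou X (mulv X x y) = cou X x * cou X y" "cou X (hone X) = 1"
  using CH unfolding comm_hopf_def is_hopf_def by blast+
lemma ax_anti: "lin (\<lambda>(a,b). mulv X (hantipode X a) (bas b)) (comv X x) = scal (cou X x) (hone X)"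
  "lin (\<lambda>(a,b). mulv X (bas a) (hantipode X b)) (comv X x) = scal (cou X x) (hone X)"
  using CH unfolding comm_hopf_def is_hopf_def by blast+

sublocale A: calg "mulv X" "hone X" by (rule calg_mulv[OF CH])

lemma coassoc:
  "lin (\<lambda>(a,b). lin (\<lambda>(a1,a2). G a1 a2 b) (hcomult X a)) (hcomult X c) =
   lin (\<lambda>(a,b). lin (\<lambda>(b1,b2). G a b1 b2) (hcomult X b)) (hcomult X c)"
proof -
  have "lin (\<lambda>(u,v,w). G u v w) (lin (\<lambda>(a,b). lin (\<lambda>(a1,a2). bas (a1,(a2,b))) (hcomult X a)) (comv X (bas c)))
    = lin (\<lambda>(u,v,w). G u v w) (com2 X (bas c))" by (simp only: ax_coassoc)
  then show ?thesis by (simp add: com2_def comv_def lin_lin split_def)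
qed

lemma counitL: "lin (\<lambda>(a,b). scal (hcounit X a) (G b)) (hcomult X c) = G c"
proof -
  have "lin G (lin (\<lambda>(a,b). scal (hcounit X a) (bas b)) (comv X (bas c))) = lin G (bas c)"
    by (simp only: ax_counit)
  then show ?thesis by (simp add: comv_def lin_lin split_def lin_scal)
qed

lemma counitR: "lin (\<lambda>(a,b). scal (hcounit X b) (G a)) (hcomult X c) = G c"
proof -
  have "lin G (lin (\<lambda>(a,b). scal (hcounit X b) (bas a)) (comv X (bas c))) = lin G (bas c)"
    by (simp only: ax_counit)
  then show ?thesis by (simp add: comv_def lin_lin split_def lin_scal)
qed

lemma antiL: "lin (\<lambda>(a,b). mulv X (hantipode X a) (bas b)) (hcomult X c) = scal (hcounit X c) (hone X)"
  using ax_anti(1)[of "bas c"] by (simp add: comv_def cou_def)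

lemma antiR: "lin (\<lambda>(a,b). mulv X (bas a) (hantipode X b)) (hcomult X c) = scal (hcounit X c) (hone X)"
  using ax_anti(2)[of "bas c"] by (simp add: comv_def cou_def)

lemma cou_bas[simp]: "cou X (bas c) = hcounit X c"
  by (simp add: cou_def)

lemma comult_bas: "lin (hcomult X) (hmult X a b) = tprod X X (hcomult X a) (hcomult X b)"
  using ax_comult[of "bas a" "bas b"] by (simp add: comv_def mulv_def)

lemma cou_mult: "lfun (hcounit X) (hmult X a b) = hcounit X a * hcounit X b"
  using ax_cou(1)[of "bas a" "bas b"] by (simp add: cou_def mulv_def)

lemma anti_mult_bas: "lin (hantipode X) (hmult X a b) = mulv X (hantipode X a) (hantipode X b)"
proof -
  let ?D = "hcomult X" and ?e = "hcounit X" and ?S = "hantipode X" and ?m = "mulv X" and ?o = "hone X"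
  let ?Sv = "lin (hantipode X)"
  let ?\<Phi> = "\<lambda>a1 x y b1 z w. ?m (?Sv (hmult X a1 b1)) (?m (hmult X x z) (?m (?S y) (?S w)))"
  have hm: "hmult X x z = ?m (bas x) (bas z)" for x z by (simp add: mulv_def)
  have F: "?Sv (hmult X a b) = lin (\<lambda>(a1,a2). lin (\<lambda>(b1,b2). scal (?e a2) (scal (?e b2) (?Sv (hmult X a1 b1)))) (?D b)) (?D a)"
    by (simp add: lin_fscal2 counitR del: scal_scal)
  have G: "?m (?S a) (?S b) = lin (\<lambda>(a1,a2). lin (\<lambda>(b1,b2). scal (?e a1) (scal (?e b1) (?m (?S a2) (?S b2)))) (?D b)) (?D a)"
    by (simp add: lin_fscal2 counitL del: scal_scal)
  have MG: "lin (\<lambda>(x,y). lin (\<lambda>(z,w). ?m (hmult X x z) (?m (?S y) (?S w))) (?D b2)) (?D a2) = scal (?e a2) (scal (?e b2) ?o)" for a2 b2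
  proof -
    have "lin (\<lambda>(x,y). lin (\<lambda>(z,w). ?m (hmult X x z) (?m (?S y) (?S w))) (?D b2)) (?D a2)
      = lin (\<lambda>(x,y). lin (\<lambda>(z,w). ?m (?m (bas x) (?S y)) (?m (bas z) (?S w))) (?D b2)) (?D a2)"
      by (simp add: hm A.ac)
    also have "\<dots> = ?m (lin (\<lambda>(x,y). ?m (bas x) (?S y)) (?D a2)) (lin (\<lambda>(z,w). ?m (bas z) (?S w)) (?D b2))"
      by (simp add: A.mul_lin A.mul_lin2 split_def, rule lin_swap)
    also have "\<dots> = scal (?e a2) (scal (?e b2) ?o)"
      by (simp add: antiR A.mul_scal A.mul_scal2 A.one_l mult.commute)
    finally show ?thesis .
  qed
  have FM: "lin (\<lambda>(x,y). lin (\<lambda>(z,w). ?m (?Sv (hmult X x z)) (hmult X y w)) (?D b1)) (?D a1) = scal (?e a1 * ?e b1) ?o" for a1 b1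
  proof -
    have "lin (\<lambda>(x,y). lin (\<lambda>(z,w). ?m (?Sv (hmult X x z)) (hmult X y w)) (?D b1)) (?D a1)
       = lin (\<lambda>(u,v). ?m (?S u) (bas v)) (tprod X X (?D a1) (?D b1))"
      by (simp add: tprod_def lin_lin lin_tens split_def A.mul_lin A.lin_mul_bas)
    also have "\<dots> = lin (\<lambda>(u,v). ?m (?S u) (bas v)) (lin ?D (hmult X a1 b1))"
      by (simp add: comult_bas)
    also have "\<dots> = lin (\<lambda>c. scal (?e c) ?o) (hmult X a1 b1)"
      by (simp add: lin_lin antiL)
    also have "\<dots> = scal (?e a1 * ?e b1) ?o"
      by (simp add: lin_scal_lfun cou_mult)
    finally show ?thesis .
  qed
  have "?Sv (hmult X a b) = lin (\<lambda>(a1,a2). lin (\<lambda>(b1,b2). ?m (?Sv (hmult X a1 b1))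
      (lin (\<lambda>(x,y). lin (\<lambda>(z,w). ?m (hmult X x z) (?m (?S y) (?S w))) (?D b2)) (?D a2))) (?D b)) (?D a)"
    unfolding F MG by (simp add: A.mul_scal2 A.one_r del: scal_scal)
  also have "\<dots> = lin (\<lambda>(a1,a2). lin (\<lambda>(b1,b2). lin (\<lambda>(x,y). lin (\<lambda>(z,w). ?\<Phi> a1 x y b1 z w) (?D b2)) (?D a2)) (?D b)) (?D a)"
    by (simp add: A.mul_lin2 split_def)
  also have "\<dots> = lin (\<lambda>(a1,a2). lin (\<lambda>(x,y). lin (\<lambda>(b1,b2). lin (\<lambda>(z,w). ?\<Phi> a1 x y b1 z w) (?D b2)) (?D b)) (?D a2)) (?D a)"
    by (rule arg_cong[where f="\<lambda>F. lin F (?D a)"], rule ext, simp add: split_def, rule lin_swap)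
  also have "\<dots> = lin (\<lambda>(p,y). lin (\<lambda>(a1,x). lin (\<lambda>(b1,b2). lin (\<lambda>(z,w). ?\<Phi> a1 x y b1 z w) (?D b2)) (?D b)) (?D p)) (?D a)"
    by (rule coassoc[symmetric])
  also have "\<dots> = lin (\<lambda>(p,y). lin (\<lambda>(a1,x). lin (\<lambda>(q,w). lin (\<lambda>(b1,z). ?\<Phi> a1 x y b1 z w) (?D q)) (?D b)) (?D p)) (?D a)"
    by (subst coassoc[symmetric], rule refl)
  also have "\<dots> = lin (\<lambda>(p,y). lin (\<lambda>(q,w). lin (\<lambda>(a1,x). lin (\<lambda>(b1,z). ?\<Phi> a1 x y b1 z w) (?D q)) (?D p)) (?D b)) (?D a)"
    by (rule arg_cong[where f="\<lambda>F. lin F (?D a)"], rule ext, simp add: split_def, rule lin_swap)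
  also have "\<dots> = lin (\<lambda>(p,y). lin (\<lambda>(q,w). ?m (lin (\<lambda>(x,y). lin (\<lambda>(z,w). ?m (?Sv (hmult X x z)) (hmult X y w)) (?D q)) (?D p)) (?m (?S y) (?S w))) (?D b)) (?D a)"
    by (simp add: A.mul_lin A.mul_lin2 A.ac split_def)
  also have "\<dots> = ?m (?S a) (?S b)"
    unfolding FM G by (simp add: A.mul_scal A.one_l mult.commute)
  finally show ?thesis .
qed

lemma antv_bas[simp]: "antv X (bas a) = hantipode X a" by (simp add: antv_def)

lemma anti_mult: "antv X (mulv X u v) = mulv X (antv X u) (antv X v)"
proof -
  have "antv X (mulv X u v) = lin (\<lambda>a. lin (\<lambda>b. lin (hantipode X) (hmult X a b)) v) u"
    by (simp add: antv_def mulv_def lin_lin)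
  also have "\<dots> = lin (\<lambda>a. lin (\<lambda>b. mulv X (hantipode X a) (hantipode X b)) v) u"
    by (simp add: anti_mult_bas)
  also have "\<dots> = mulv X (antv X u) (antv X v)"
    by (simp add: antv_def A.mul_lin A.mul_lin2, rule lin_swap)
  finally show ?thesis .
qed

lemma anti_one: "antv X (hone X) = hone X"
proof -
  have "lin (\<lambda>(a,b). mulv X (hantipode X a) (bas b)) (comv X (hone X)) = scal (cou X (hone X)) (hone X)"
    by (rule ax_anti(1))
  then show ?thesis
    by (simp add: ax_comult1 ax_cou lin_tens A.lin_mul_bas A.one_r antv_def)
qed

end


definition cv :: "('b,'k::field) hopf \<Rightarrow> (('a,'k) vec \<Rightarrow> ('a,'k) vec \<Rightarrow> ('a,'k) vec) \<Rightarrow>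
   ('b \<Rightarrow> ('a,'k) vec) \<Rightarrow> ('b \<Rightarrow> ('a,'k) vec) \<Rightarrow> 'b \<Rightarrow> ('a,'k) vec"
  where "cv X m p q c = lin (\<lambda>(a,b). m (p a) (q b)) (hcomult X c)"
definition ep :: "('b,'k::field) hopf \<Rightarrow> ('a,'k) vec \<Rightarrow> 'b \<Rightarrow> ('a,'k) vec"
  where "ep X one c = scal (hcounit X c) one"
definition an :: "('b,'k::field) hopf \<Rightarrow> ('b \<Rightarrow> ('a,'k) vec) \<Rightarrow> 'b \<Rightarrow> ('a,'k) vec"
  where "an X p c = lin p (hantipode X c)"
definition isalg :: "('b,'k::field) hopf \<Rightarrow> (('a,'k) vec \<Rightarrow> ('a,'k) vec \<Rightarrow> ('a,'k) vec) \<Rightarrow> ('a,'k) vec \<Rightarrow> ('b \<Rightarrow> ('a,'k) vec) \<Rightarrow> bool"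
  where "isalg X m one p \<longleftrightarrow> (\<forall>a b. lin p (hmult X a b) = m (p a) (p b)) \<and> lin p (hone X) = one"
definition cmp :: "('b \<Rightarrow> ('a,'k::field) vec) \<Rightarrow> ('c \<Rightarrow> ('b,'k) vec) \<Rightarrow> 'c \<Rightarrow> ('a,'k) vec"
  where "cmp p T c = lin p (T c)"

lemma cmp_fun: "cmp p T = (\<lambda>c. lin p (T c))"
  by (rule ext) (simp add: cmp_def)
lemma lin_cmp: "lin (cmp p T) v = lin p (lin T v)"
  by (simp add: cmp_fun lin_lin)

locale pts = chopf X + M: calg m one
  for X :: "('b,'k::field) hopf" and m :: "('a,'k) vec \<Rightarrow> ('a,'k) vec \<Rightarrow> ('a,'k) vec" and one
begin

abbreviation conv where "conv \<equiv> cv X m"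
abbreviation e where "e \<equiv> ep X one"
abbreviation iv :: "('b \<Rightarrow> ('a,'k) vec) \<Rightarrow> 'b \<Rightarrow> ('a,'k) vec" where "iv \<equiv> an X"
abbreviation alg where "alg \<equiv> isalg X m one"

lemma lin_pair_tens: "lin (\<lambda>(x,y). m (p x) (q y)) (tens u v) = m (lin p u) (lin q v)"
  by (simp add: lin_tens M.mul_lin M.mul_lin2) (subst lin_swap, rule refl)

lemma lin_pair_tens': "lin (\<lambda>z. m (p (fst z)) (q (snd z))) (tens u v) = m (lin p u) (lin q v)"
  using lin_pair_tens[of p q u v] by (simp add: split_def)

lemma alg_mulv: "alg p \<Longrightarrow> lin p (mulv X u v) = m (lin p u) (lin p v)"
  unfolding isalg_def mulv_def
  by (simp add: lin_lin M.mul_lin M.mul_lin2) (subst lin_swap, rule refl)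

lemma alg_one: "alg p \<Longrightarrow> lin p (hone X) = one"
  by (simp add: isalg_def)

lemma alg_hmult: "alg p \<Longrightarrow> lin p (hmult X a b) = m (p a) (p b)"
  by (simp add: isalg_def)

lemma conv_fun: "conv p q = (\<lambda>c. lin (\<lambda>(a,b). m (p a) (q b)) (hcomult X c))"
  by (rule ext) (simp add: cv_def)
lemma ep_fun: "e = (\<lambda>c. scal (hcounit X c) one)"
  by (rule ext) (simp add: ep_def)
lemma an_fun: "iv p = (\<lambda>c. lin p (hantipode X c))"
  by (rule ext) (simp add: an_def)
lemma lin_iv: "lin (iv p) w = lin p (antv X w)"
  by (simp add: an_fun antv_def lin_lin)
lemma lin_conv: "lin (conv p q) v = lin (\<lambda>(a,b). m (p a) (q b)) (comv X v)"
  by (simp add: conv_fun comv_def lin_lin)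

lemma conv_assoc: "conv (conv p q) r = conv p (conv q r)"
proof
  fix c
  have "conv (conv p q) r c = lin (\<lambda>(a,b). lin (\<lambda>(a1,a2). m (m (p a1) (q a2)) (r b)) (hcomult X a)) (hcomult X c)"
    by (simp add: cv_def M.mul_lin split_def)
  also have "\<dots> = lin (\<lambda>(a,b). lin (\<lambda>(b1,b2). m (m (p a) (q b1)) (r b2)) (hcomult X b)) (hcomult X c)"
    by (rule coassoc)
  also have "\<dots> = conv p (conv q r) c"
    by (simp add: cv_def M.mul_lin2 M.assoc split_def)
  finally show "conv (conv p q) r c = conv p (conv q r) c" .
qed

lemma conv_e_l[simp]: "conv e p = p"
  by (rule ext) (simp add: cv_def ep_def M.mul_scal M.one_l counitL)

lemma conv_e_r[simp]: "conv p e = p"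
  by (rule ext) (simp add: cv_def ep_def M.mul_scal2 M.one_r counitR)

lemma conv_inv_r: "alg p \<Longrightarrow> conv p (iv p) = e"
proof
  fix c assume a: "alg p"
  have "conv p (iv p) c = lin p (lin (\<lambda>(a,b). mulv X (bas a) (hantipode X b)) (hcomult X c))"
    by (simp add: cv_def an_def lin_lin split_def alg_mulv[OF a])
  also have "\<dots> = e c" by (simp add: antiR lin_scal alg_one[OF a] ep_def)
  finally show "conv p (iv p) c = e c" .
qed

lemma conv_inv_l: "alg p \<Longrightarrow> conv (iv p) p = e"
proof
  fix c assume a: "alg p"
  have "conv (iv p) p c = lin p (lin (\<lambda>(a,b). mulv X (hantipode X a) (bas b)) (hcomult X c))"
    by (simp add: cv_def an_def lin_lin split_def alg_mulv[OF a])
  also have "\<dots> = e c" by (simp add: antiL lin_scal alg_one[OF a] ep_def)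
  finally show "conv (iv p) p c = e c" .
qed

lemma alg_e: "alg e"
proof -
  have "lin e (hmult X a b) = m (e a) (e b)" for a b
    using cou_mult[of a b] by (simp add: ep_fun lin_scal_lfun M.mul_scal M.mul_scal2 M.one_l mult.commute)
  moreover have "lin e (hone X) = one"
    using ax_cou(2) by (simp add: ep_fun lin_scal_lfun cou_def)
  ultimately show ?thesis by (simp add: isalg_def)
qed

lemma alg_conv: assumes "alg p" "alg q" shows "alg (conv p q)"
proof -
  have "lin (conv p q) (hmult X a b) = m (conv p q a) (conv p q b)" for a b
  proof -
    have "lin (conv p q) (hmult X a b) = lin (\<lambda>(x,y). m (p x) (q y)) (lin (hcomult X) (hmult X a b))"
      by (simp add: conv_fun lin_lin)
    also have "\<dots> = lin (\<lambda>(x,y). lin (\<lambda>(z,w). m (m (p x) (p z)) (m (q y) (q w))) (hcomult X b)) (hcomult X a)"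
      by (simp add: comult_bas tprod_def lin_lin lin_pair_tens' split_def alg_hmult assms)
    also have "\<dots> = m (conv p q a) (conv p q b)"
      unfolding cv_def by (subst M.mul_lin) (simp add: M.mul_lin2 split_def M.ac)
    finally show ?thesis .
  qed
  moreover have "lin (conv p q) (hone X) = one"
    by (simp add: lin_conv ax_comult1 lin_pair_tens alg_one assms M.one_l)
  ultimately show ?thesis by (simp add: isalg_def)
qed

lemma alg_inv: assumes "alg p" shows "alg (iv p)"
proof -
  have "lin (iv p) (hmult X a b) = m (iv p a) (iv p b)" for a b
  proof -
    have "lin (iv p) (hmult X a b) = lin p (antv X (mulv X (bas a) (bas b)))"
      by (simp add: lin_iv mulv_def)
    also have "\<dots> = m (iv p a) (iv p b)"
      by (simp add: anti_mult alg_mulv assms an_def antv_bas)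
    finally show ?thesis .
  qed
  moreover have "lin (iv p) (hone X) = one"
    using anti_one by (simp add: lin_iv alg_one assms)
  ultimately show ?thesis by (simp add: isalg_def)
qed

lemma inv_unique: assumes "alg p" "conv p q = e" shows "q = iv p"
proof -
  have "q = conv (conv (iv p) p) q" using conv_inv_l[OF assms(1)] by simp
  also have "\<dots> = iv p" by (simp add: conv_assoc assms)
  finally show ?thesis .
qed

lemma inv_conv: assumes "alg p" "alg q" shows "iv (conv p q) = conv (iv q) (iv p)"
proof -
  have "conv (conv p q) (conv (iv q) (iv p)) = e"
    by (simp add: conv_assoc[symmetric]) (simp add: conv_assoc conv_inv_r assms)
  then show ?thesis using inv_unique alg_conv assms by metis
qed

lemma inv_inv: assumes "alg p" shows "iv (iv p) = p"
  using inv_unique[OF alg_inv[OF assms] conv_inv_l[OF assms]] by simp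

lemma inv_e: "iv e = e"
  using inv_unique[OF alg_e, of e] by simp

lemma conv_cancel1: "alg p \<Longrightarrow> conv p (conv (iv p) q) = q"
  by (simp add: conv_assoc[symmetric] conv_inv_r)
lemma conv_cancel2: "alg p \<Longrightarrow> conv (iv p) (conv p q) = q"
  by (simp add: conv_assoc[symmetric] conv_inv_l)

end


locale bic0 = H: chopf H + C: chopf C
  for H :: "('h,'k::field) hopf" and C :: "('c,'k) hopf" +
  fixes rl :: "'c \<Rightarrow> ('h \<times> 'c,'k) vec" and rr :: "'c \<Rightarrow> ('c \<times> 'h,'k) vec"
  assumes BIC: "bicomod_hopf H C rl rr"
begin

lemmas A1 = BIC[unfolded bicomod_hopf_def, THEN conjunct1, rule_format]
lemmas A2 = BIC[unfolded bicomod_hopf_def, THEN conjunct2, THEN conjunct1, rule_format]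
lemmas A3 = BIC[unfolded bicomod_hopf_def, THEN conjunct2, THEN conjunct2, THEN conjunct1, rule_format]
lemmas A4 = BIC[unfolded bicomod_hopf_def, THEN conjunct2, THEN conjunct2, THEN conjunct2, THEN conjunct1, rule_format]
lemmas A5 = BIC[unfolded bicomod_hopf_def, THEN conjunct2, THEN conjunct2, THEN conjunct2, THEN conjunct2, THEN conjunct1, rule_format]
lemmas A6 = BIC[unfolded bicomod_hopf_def, THEN conjunct2, THEN conjunct2, THEN conjunct2, THEN conjunct2, THEN conjunct2, THEN conjunct1, rule_format]
lemmas A7 = BIC[unfolded bicomod_hopf_def, THEN conjunct2, THEN conjunct2, THEN conjunct2, THEN conjunct2, THEN conjunct2, THEN conjunct2, THEN conjunct1]
lemmas A8 = BIC[unfolded bicomod_hopf_def, THEN conjunct2, THEN conjunct2, THEN conjunct2, THEN conjunct2, THEN conjunct2, THEN conjunct2, THEN conjunct2, THEN conjunct1, rule_format]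
lemmas A9 = BIC[unfolded bicomod_hopf_def, THEN conjunct2, THEN conjunct2, THEN conjunct2, THEN conjunct2, THEN conjunct2, THEN conjunct2, THEN conjunct2, THEN conjunct2, THEN conjunct1]
lemmas A10 = BIC[unfolded bicomod_hopf_def, THEN conjunct2, THEN conjunct2, THEN conjunct2, THEN conjunct2, THEN conjunct2, THEN conjunct2, THEN conjunct2, THEN conjunct2, THEN conjunct2, THEN conjunct1, rule_format]
lemmas A11 = BIC[unfolded bicomod_hopf_def, THEN conjunct2, THEN conjunct2, THEN conjunct2, THEN conjunct2, THEN conjunct2, THEN conjunct2, THEN conjunct2, THEN conjunct2, THEN conjunct2, THEN conjunct2, THEN conjunct1, rule_format]
lemmas A12 = BIC[unfolded bicomod_hopf_def, THEN conjunct2, THEN conjunct2, THEN conjunct2, THEN conjunct2, THEN conjunct2, THEN conjunct2, THEN conjunct2, THEN conjunct2, THEN conjunct2, THEN conjunct2, THEN conjunct2, THEN conjunct1, rule_format]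
lemmas A13 = BIC[unfolded bicomod_hopf_def, THEN conjunct2, THEN conjunct2, THEN conjunct2, THEN conjunct2, THEN conjunct2, THEN conjunct2, THEN conjunct2, THEN conjunct2, THEN conjunct2, THEN conjunct2, THEN conjunct2, THEN conjunct2, THEN conjunct1, rule_format]
lemmas A14 = BIC[unfolded bicomod_hopf_def, THEN conjunct2, THEN conjunct2, THEN conjunct2, THEN conjunct2, THEN conjunct2, THEN conjunct2, THEN conjunct2, THEN conjunct2, THEN conjunct2, THEN conjunct2, THEN conjunct2, THEN conjunct2, THEN conjunct2, THEN conjunct1, rule_format]
lemmas A15 = BIC[unfolded bicomod_hopf_def, THEN conjunct2, THEN conjunct2, THEN conjunct2, THEN conjunct2, THEN conjunct2, THEN conjunct2, THEN conjunct2, THEN conjunct2, THEN conjunct2, THEN conjunct2, THEN conjunct2, THEN conjunct2, THEN conjunct2, THEN conjunct2, rule_format]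

lemma L1: "lin (\<lambda>(h,c). lin (\<lambda>(h',c'). G h h' c') (rl c)) (rl c0) =
           lin (\<lambda>(h,c). lin (\<lambda>(h1,h2). G h1 h2 c) (hcomult H h)) (rl c0)"
proof -
  have "lin (\<lambda>(u,v,w). G u v w) (lin (\<lambda>(h,c). lin (\<lambda>(h',c'). bas (h,(h',c'))) (rl c)) (lin rl (bas c0))) =
        lin (\<lambda>(u,v,w). G u v w) (lin (\<lambda>(h,c). lin (\<lambda>(h1,h2). bas (h1,(h2,c))) (hcomult H h)) (lin rl (bas c0)))"
    by (simp only: A1)
  then show ?thesis by (simp add: lin_lin split_def)
qed

lemma L2: "lin (\<lambda>(h,c). scal (hcounit H h) (G c)) (rl c0) = G c0"
proof -
  have "lin G (lin (\<lambda>(h,c). scal (hcounit H h) (bas c)) (lin rl (bas c0))) = lin G (bas c0)"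
    by (simp only: A2)
  then show ?thesis by (simp add: lin_lin split_def lin_scal)
qed

lemma R1: "lin (\<lambda>(c,h). lin (\<lambda>(c',h'). G c' h' h) (rr c)) (rr c0) =
           lin (\<lambda>(c,h). lin (\<lambda>(h1,h2). G c h1 h2) (hcomult H h)) (rr c0)"
proof -
  have "lin (\<lambda>(u,v,w). G u v w) (lin (\<lambda>(c,h). lin (\<lambda>(c',h'). bas (c',(h',h))) (rr c)) (lin rr (bas c0))) =
        lin (\<lambda>(u,v,w). G u v w) (lin (\<lambda>(c,h). lin (\<lambda>(h1,h2). bas (c,(h1,h2))) (hcomult H h)) (lin rr (bas c0)))"
    by (simp only: A3)
  then show ?thesis by (simp add: lin_lin split_def)
qed

lemma R2: "lin (\<lambda>(c,h). scal (hcounit H h) (G c)) (rr c0) = G c0"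
proof -
  have "lin G (lin (\<lambda>(c,h). scal (hcounit H h) (bas c)) (lin rr (bas c0))) = lin G (bas c0)"
    by (simp only: A4)
  then show ?thesis by (simp add: lin_lin split_def lin_scal)
qed

lemma LR: "lin (\<lambda>(h,c). lin (\<lambda>(c',h'). G h c' h') (rr c)) (rl c0) =
           lin (\<lambda>(c,h). lin (\<lambda>(h',c'). G h' c' h) (rl c)) (rr c0)"
proof -
  have "lin (\<lambda>(u,v,w). G u v w) (lin (\<lambda>(h,c). lin (\<lambda>(c',h'). bas (h,(c',h'))) (rr c)) (lin rl (bas c0))) =
        lin (\<lambda>(u,v,w). G u v w) (lin (\<lambda>(c,h). lin (\<lambda>(h',c'). bas (h',(c',h))) (rl c)) (lin rr (bas c0)))"
    by (simp only: A5)
  then show ?thesis by (simp add: lin_lin split_def)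
qed

lemma LD: "lin (\<lambda>(h,c). lin (\<lambda>(c1,c2). G h c1 c2) (hcomult C c)) (rl c0) =
  lin (\<lambda>(a,b). lin (\<lambda>(h,c). lin (\<lambda>(h',c'). lin (\<lambda>x. G x c c') (hmult H h h')) (rl b)) (rl a)) (hcomult C c0)"
proof -
  have "lin (\<lambda>(u,v,w). G u v w) (lin (\<lambda>(h,c). lin (\<lambda>(c1,c2). bas (h,(c1,c2))) (hcomult C c)) (lin rl (bas c0))) =
        lin (\<lambda>(u,v,w). G u v w) (lin (\<lambda>(a,b). lin (\<lambda>(h,c). lin (\<lambda>(h',c'). tens (hmult H h h') (bas (c,c'))) (rl b)) (rl a)) (comv C (bas c0)))"
    by (simp only: A10)
  then show ?thesis by (simp add: lin_lin split_def comv_def lin_tens)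
qed

lemma RD: "lin (\<lambda>(c,h). lin (\<lambda>(c1,c2). G c1 c2 h) (hcomult C c)) (rr c0) =
  lin (\<lambda>(a,b). lin (\<lambda>(c,h). lin (\<lambda>(c',h'). lin (\<lambda>y. G c c' y) (hmult H h h')) (rr b)) (rr a)) (hcomult C c0)"
proof -
  have "lin (\<lambda>(u,v,w). G u v w) (lin (\<lambda>(c,h). lin (\<lambda>(c1,c2). bas (c1,(c2,h))) (hcomult C c)) (lin rr (bas c0))) =
        lin (\<lambda>(u,v,w). G u v w) (lin (\<lambda>(a,b). lin (\<lambda>(c,h). lin (\<lambda>(c',h'). tens (bas c) (tens (bas c') (hmult H h h'))) (rr b)) (rr a)) (comv C (bas c0)))"
    by (simp only: A11)
  then show ?thesis by (simp add: lin_lin split_def comv_def lin_tens)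
qed

lemma Le: "lin (\<lambda>(h,c). scal (hcounit C c) (G h)) (rl c0) = scal (hcounit C c0) (lin G (hone H))"
proof -
  have "lin G (lin (\<lambda>(h,c). scal (hcounit C c) (bas h)) (lin rl (bas c0))) = lin G (scal (cou C (bas c0)) (hone H))"
    by (simp only: A12)
  then show ?thesis by (simp add: lin_lin split_def lin_scal)
qed

lemma Re: "lin (\<lambda>(c,h). scal (hcounit C c) (G h)) (rr c0) = scal (hcounit C c0) (lin G (hone H))"
proof -
  have "lin G (lin (\<lambda>(c,h). scal (hcounit C c) (bas h)) (lin rr (bas c0))) = lin G (scal (cou C (bas c0)) (hone H))"
    by (simp only: A13)
  then show ?thesis by (simp add: lin_lin split_def lin_scal)
qed

lemma Lalg: "lin rl (hmult C a b) = tprod H C (rl a) (rl b)" "lin rl (hone C) = tens (hone H) (hone C)"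
proof -
  show "lin rl (hmult C a b) = tprod H C (rl a) (rl b)"
    using A6[of "bas a" "bas b"] by (simp add: mulv_def)
  show "lin rl (hone C) = tens (hone H) (hone C)"
    by (rule A7)
qed

lemma Ralg: "lin rr (hmult C a b) = tprod C H (rr a) (rr b)" "lin rr (hone C) = tens (hone C) (hone H)"
proof -
  show "lin rr (hmult C a b) = tprod C H (rr a) (rr b)"
    using A8[of "bas a" "bas b"] by (simp add: mulv_def)
  show "lin rr (hone C) = tens (hone C) (hone H)"
    by (rule A9)
qed

lemma LS: "lin rl (hantipode C c) = lin (\<lambda>(h,c). tens (bas h) (hantipode C c)) (rl c)"
  using A14[of "bas c"] by (simp add: antv_def)

lemma RS: "lin rr (hantipode C c) = lin (\<lambda>(c,h). tens (hantipode C c) (bas h)) (rr c)"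
  using A15[of "bas c"] by (simp add: antv_def)

end


definition lac :: "('c \<Rightarrow> ('h \<times> 'c,'k::field) vec) \<Rightarrow> (('a,'k) vec \<Rightarrow> ('a,'k) vec \<Rightarrow> ('a,'k) vec) \<Rightarrow>
   ('h \<Rightarrow> ('a,'k) vec) \<Rightarrow> ('c \<Rightarrow> ('a,'k) vec) \<Rightarrow> 'c \<Rightarrow> ('a,'k) vec"
  where "lac rl m g x c = lin (\<lambda>(h,c'). m (g h) (x c')) (rl c)"
definition rac :: "('c \<Rightarrow> ('c \<times> 'h,'k::field) vec) \<Rightarrow> (('a,'k) vec \<Rightarrow> ('a,'k) vec \<Rightarrow> ('a,'k) vec) \<Rightarrow>
   ('c \<Rightarrow> ('a,'k) vec) \<Rightarrow> ('h \<Rightarrow> ('a,'k) vec) \<Rightarrow> 'c \<Rightarrow> ('a,'k) vec"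
  where "rac rr m x g c = lin (\<lambda>(c',h). m (x c') (g h)) (rr c)"

locale bic = bic0 H C rl rr + M: calg m one
  for H :: "('h,'k::field) hopf" and C :: "('c,'k) hopf" and rl rr
  and m :: "('a,'k) vec \<Rightarrow> ('a,'k) vec \<Rightarrow> ('a,'k) vec" and one
begin

sublocale PH: pts H m one by unfold_locales
sublocale PC: pts C m one by unfold_locales

abbreviation la where "la \<equiv> lac rl m"
abbreviation ra where "ra \<equiv> rac rr m"

lemma la_fun: "la g x = (\<lambda>c. lin (\<lambda>(h,c'). m (g h) (x c')) (rl c))"
  by (rule ext) (simp add: lac_def)
lemma ra_fun: "ra x g = (\<lambda>c. lin (\<lambda>(c',h). m (x c') (g h)) (rr c))"
  by (rule ext) (simp add: rac_def)

lemma la_conv: "la (PH.conv g g') x = la g (la g' x)"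
proof
  fix c
  have "la g (la g' x) c = lin (\<lambda>(h,c1). lin (\<lambda>(h',c'). m (g h) (m (g' h') (x c'))) (rl c1)) (rl c)"
    by (simp add: lac_def M.mul_lin2 split_def)
  also have "\<dots> = lin (\<lambda>(h,c1). lin (\<lambda>(h1,h2). m (g h1) (m (g' h2) (x c1))) (hcomult H h)) (rl c)"
    by (rule L1)
  also have "\<dots> = la (PH.conv g g') x c"
    by (simp add: lac_def cv_def M.mul_lin M.assoc split_def)
  finally show "la (PH.conv g g') x c = la g (la g' x) c" ..
qed

lemma la_e: "la PH.e x = x"
  by (rule ext) (simp add: lac_def ep_def M.mul_scal M.one_l L2)

lemma la_convC: assumes "PH.alg g" shows "la g (PC.conv x y) = PC.conv (la g x) (la g y)"
proof
  fix c
  have "la g (PC.conv x y) c = lin (\<lambda>(h,c'). lin (\<lambda>(c1,c2). m (g h) (m (x c1) (y c2))) (hcomult C c')) (rl c)"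
    by (simp add: lac_def cv_def M.mul_lin2 split_def)
  also have "\<dots> = lin (\<lambda>(a,b). lin (\<lambda>(h,c1). lin (\<lambda>(h',c2). lin (\<lambda>z. m (g z) (m (x c1) (y c2))) (hmult H h h')) (rl b)) (rl a)) (hcomult C c)"
    by (rule LD)
  also have "\<dots> = lin (\<lambda>(a,b). lin (\<lambda>(h,c1). lin (\<lambda>(h',c2). m (m (g h) (x c1)) (m (g h') (y c2))) (rl b)) (rl a)) (hcomult C c)"
    by (simp add: M.mul_lin[symmetric] PH.alg_hmult assms M.ac)
  also have "\<dots> = PC.conv (la g x) (la g y) c"
    by (simp add: lac_def cv_def M.mul_lin12 split_def)
  finally show "la g (PC.conv x y) c = PC.conv (la g x) (la g y) c" .
qed

lemma la_eC: assumes "PH.alg g" shows "la g PC.e = PC.e"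
  by (rule ext) (simp add: lac_def ep_def M.mul_scal2 M.one_r Le PH.alg_one assms)

lemma alg_la: assumes "PH.alg g" "PC.alg x" shows "PC.alg (la g x)"
proof -
  have "lin (la g x) (hmult C a b) = m (la g x a) (la g x b)" for a b
  proof -
    have "lin (la g x) (hmult C a b) = lin (\<lambda>(h,c). m (g h) (x c)) (lin rl (hmult C a b))"
      by (simp add: la_fun lin_lin)
    also have "\<dots> = lin (\<lambda>(h,c). lin (\<lambda>(h',c'). m (m (g h) (g h')) (m (x c) (x c'))) (rl b)) (rl a)"
      by (simp add: Lalg tprod_def lin_lin PH.lin_pair_tens' split_def PH.alg_hmult PC.alg_hmult assms)
    also have "\<dots> = m (la g x a) (la g x b)"
      by (simp add: lac_def M.mul_lin12 split_def M.ac)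
    finally show ?thesis .
  qed
  moreover have "lin (la g x) (hone C) = one"
    by (simp add: la_fun lin_lin[symmetric] Lalg PH.lin_pair_tens PH.alg_one PC.alg_one assms M.one_l)
  ultimately show ?thesis by (simp add: isalg_def)
qed

lemma la_iv: "la g (PC.iv x) = PC.iv (la g x)"
proof
  fix c
  have "PC.iv (la g x) c = lin (\<lambda>(h,c). m (g h) (x c)) (lin rl (hantipode C c))"
    by (simp add: an_def la_fun lin_lin)
  also have "\<dots> = la g (PC.iv x) c"
    by (simp add: LS lin_lin split_def PH.lin_pair_tens' lac_def an_def)
  finally show "la g (PC.iv x) c = PC.iv (la g x) c" ..
qed

lemma ra_conv: "ra x (PH.conv g g') = ra (ra x g) g'"
proof
  fix c
  have "ra (ra x g) g' c = lin (\<lambda>(c1,h). lin (\<lambda>(c',h'). m (m (x c') (g h')) (g' h)) (rr c1)) (rr c)"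
    by (simp add: rac_def M.mul_lin split_def)
  also have "\<dots> = lin (\<lambda>(c1,h). lin (\<lambda>(h1,h2). m (m (x c1) (g h1)) (g' h2)) (hcomult H h)) (rr c)"
    by (rule R1)
  also have "\<dots> = ra x (PH.conv g g') c"
    by (simp add: rac_def cv_def M.mul_lin2 M.assoc split_def)
  finally show "ra x (PH.conv g g') c = ra (ra x g) g' c" ..
qed

lemma ra_e: "ra x PH.e = x"
  by (rule ext) (simp add: rac_def ep_def M.mul_scal2 M.one_r R2)

lemma ra_convC: assumes "PH.alg g" shows "ra (PC.conv x y) g = PC.conv (ra x g) (ra y g)"
proof
  fix c
  have "ra (PC.conv x y) g c = lin (\<lambda>(c',h). lin (\<lambda>(c1,c2). m (m (x c1) (y c2)) (g h)) (hcomult C c')) (rr c)"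
    by (simp add: rac_def cv_def M.mul_lin split_def)
  also have "\<dots> = lin (\<lambda>(a,b). lin (\<lambda>(c1,h). lin (\<lambda>(c2,h'). lin (\<lambda>z. m (m (x c1) (y c2)) (g z)) (hmult H h h')) (rr b)) (rr a)) (hcomult C c)"
    by (rule RD)
  also have "\<dots> = lin (\<lambda>(a,b). lin (\<lambda>(c1,h). lin (\<lambda>(c2,h'). m (m (x c1) (g h)) (m (y c2) (g h'))) (rr b)) (rr a)) (hcomult C c)"
    by (simp add: M.mul_lin2[symmetric] M.mul_lin[symmetric] PH.alg_hmult assms M.ac)
  also have "\<dots> = PC.conv (ra x g) (ra y g) c"
    by (simp add: rac_def cv_def M.mul_lin12 split_def)
  finally show "ra (PC.conv x y) g c = PC.conv (ra x g) (ra y g) c" .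
qed

lemma ra_eC: assumes "PH.alg g" shows "ra PC.e g = PC.e"
  by (rule ext) (simp add: rac_def ep_def M.mul_scal M.one_l Re PH.alg_one assms)

lemma alg_ra: assumes "PH.alg g" "PC.alg x" shows "PC.alg (ra x g)"
proof -
  have "lin (ra x g) (hmult C a b) = m (ra x g a) (ra x g b)" for a b
  proof -
    have "lin (ra x g) (hmult C a b) = lin (\<lambda>(c,h). m (x c) (g h)) (lin rr (hmult C a b))"
      by (simp add: ra_fun lin_lin)
    also have "\<dots> = lin (\<lambda>(c,h). lin (\<lambda>(c',h'). m (m (x c) (x c')) (m (g h) (g h'))) (rr b)) (rr a)"
      by (simp add: Ralg tprod_def lin_lin PH.lin_pair_tens' split_def PH.alg_hmult PC.alg_hmult assms)
    also have "\<dots> = m (ra x g a) (ra x g b)"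
      by (simp add: rac_def M.mul_lin12 split_def M.ac)
    finally show ?thesis .
  qed
  moreover have "lin (ra x g) (hone C) = one"
    by (simp add: ra_fun lin_lin[symmetric] Ralg PH.lin_pair_tens PH.alg_one PC.alg_one assms M.one_l)
  ultimately show ?thesis by (simp add: isalg_def)
qed

lemma ra_iv: "ra (PC.iv x) g = PC.iv (ra x g)"
proof
  fix c
  have "PC.iv (ra x g) c = lin (\<lambda>(c,h). m (x c) (g h)) (lin rr (hantipode C c))"
    by (simp add: an_def ra_fun lin_lin)
  also have "\<dots> = ra (PC.iv x) g c"
    by (simp add: RS lin_lin split_def PH.lin_pair_tens' rac_def an_def)
  finally show "ra (PC.iv x) g c = PC.iv (ra x g) c" ..
qed

lemma ra_la: "ra (la g x) h = la g (ra x h)"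
proof
  fix c
  have "la g (ra x h) c = lin (\<lambda>(h',c1). lin (\<lambda>(c2,k). m (g h') (m (x c2) (h k))) (rr c1)) (rl c)"
    by (simp add: lac_def rac_def M.mul_lin2 split_def)
  also have "\<dots> = lin (\<lambda>(c1,k). lin (\<lambda>(h',c2). m (g h') (m (x c2) (h k))) (rl c1)) (rr c)"
    by (rule LR)
  also have "\<dots> = ra (la g x) h c"
    by (simp add: lac_def rac_def M.mul_lin M.assoc split_def)
  finally show "ra (la g x) h c = la g (ra x h) c" ..
qed

end


definition pip :: "(('a,'k::field) vec \<Rightarrow> ('a,'k) vec \<Rightarrow> ('a,'k) vec) \<Rightarrow> ('c \<Rightarrow> ('a,'k) vec) \<Rightarrow> ('h \<Rightarrow> ('a,'k) vec) \<Rightarrow> 'c \<times> 'h \<Rightarrow> ('a,'k) vec"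
  where "pip m x g = (\<lambda>(c,k). m (x c) (g k))"

lemma isalg_mulv:
  assumes "calg m one" "isalg X m one p"
  shows "lin p (mulv X u v) = m (lin p u) (lin p v)"
  using assms unfolding isalg_def mulv_def
  by (simp add: lin_lin calg.mul_lin12[OF assms(1)])

lemma isalg_one: "isalg X m one p \<Longrightarrow> lin p (hone X) = one"
  by (simp add: isalg_def)

lemma isalg_cmp:
  assumes "calg m one" "isalg X m one p" "\<forall>u v. lin T (mulv X u v) = mulv X (lin T u) (lin T v)" "lin T (hone X) = hone X"
  shows "isalg X m one (cmp p T)"
proof -
  have "lin (cmp p T) (hmult X a b) = m (cmp p T a) (cmp p T b)" for a b
    using assms(3)[rule_format, of "bas a" "bas b"]
    by (simp add: lin_cmp mulv_def[of X "bas a"] isalg_mulv[OF assms(1,2)] cmp_def)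
  then show ?thesis using assms(4) by (simp add: isalg_def lin_cmp isalg_one[OF assms(2)])
qed

context bic
begin

abbreviation G where "G \<equiv> smash H C rl rr"
abbreviation pi where "pi \<equiv> pip m"

lemma pi_fun: "pi x g = (\<lambda>(c,k). m (x c) (g k))" by (simp add: pip_def)

lemma pi_app[simp]: "pi x g (c,k) = m (x c) (g k)" by (simp add: pip_def)

lemma lin_pi_tens: "lin (pi x g) (tens u v) = m (lin x u) (lin g v)"
  unfolding pip_def by (rule PH.lin_pair_tens)

lemma pi_conv: assumes "PH.alg g" "PH.alg h"
  shows "cv G m (pi x g) (pi y h) = pi (PC.conv (ra x h) (la g y)) (PH.conv g h)"
proof (rule ext, clarify)
  fix c k
  let ?E = "lin (\<lambda>(a,b). lin (\<lambda>(a0,a1). lin (\<lambda>(bm,b0). lin (\<lambda>(h1,h2).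
     m (m (x a0) (m (g bm) (g h1))) (m (y b0) (m (h h2) (h a1)))) (hcomult H k)) (rl b)) (rr a)) (hcomult C c)"
  have "cv G m (pi x g) (pi y h) (c,k) = ?E"
    unfolding cv_def smash_def
    by (simp add: lin_lin split_def lin_pi_tens PH.lin_pair_tens' PH.alg_hmult assms)
  also have "?E = pi (PC.conv (ra x h) (la g y)) (PH.conv g h) (c,k)"
    apply (simp only: pip_def PC.conv_fun split_def prod.case M.mul_lin)
    apply (simp only: rac_def split_def M.mul_lin M.mul_lin2)
    apply (simp only: lac_def split_def M.mul_lin M.mul_lin2)
    apply (simp only: PH.conv_fun split_def M.mul_lin M.mul_lin2)
    apply (simp add: M.ac)
    done
  finally show "cv G m (pi x g) (pi y h) (c,k) = pi (PC.conv (ra x h) (la g y)) (PH.conv g h) (c,k)" .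
qed

lemma pi_an: assumes "PH.alg g"
  shows "an G (pi x g) = pi (la (PH.iv g) (ra (PC.iv x) (PH.iv g))) (PH.iv g)"
proof (rule ext, clarify)
  fix c k
  let ?E = "lin (\<lambda>(mm,c0). lin (\<lambda>(c00,c01). m (PC.iv x c00) (m (m (PH.iv g mm) (PH.iv g c01)) (PH.iv g k))) (rr c0)) (rl c)"
  have ig: "PH.alg (PH.iv g)" by (rule PH.alg_inv[OF assms])
  have "an G (pi x g) (c,k) = ?E"
    unfolding an_def smash_def
    by (simp add: lin_lin split_def lin_pi_tens PH.lin_iv[symmetric] PH.alg_mulv[OF ig] an_def[symmetric])
  also have "?E = pi (la (PH.iv g) (ra (PC.iv x) (PH.iv g))) (PH.iv g) (c,k)"
    apply (simp only: pip_def lac_def split_def prod.case M.mul_lin)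
    apply (simp only: rac_def split_def M.mul_lin M.mul_lin2)
    apply (simp add: M.ac)
    done
  finally show "an G (pi x g) (c,k) = pi (la (PH.iv g) (ra (PC.iv x) (PH.iv g))) (PH.iv g) (c,k)" .
qed

lemma pi_B: assumes "PH.alg (cmp g B)"
  shows "cmp (pi x g) (Btilde H rl rr R B) = pi (la (cmp g B) (ra (cmp x R) (cmp g B))) (cmp g B)"
proof (rule ext, clarify)
  fix c k
  let ?g = "cmp g B"
  let ?E = "lin (\<lambda>(mm,c0). lin (\<lambda>(c00,c01). m (cmp x R c00) (m (m (?g mm) (?g c01)) (?g k))) (rr c0)) (rl c)"
  have "cmp (pi x g) (Btilde H rl rr R B) (c,k) = ?E"
    unfolding cmp_def[of "pi x g"] Btilde_def
    by (simp add: lin_lin split_def lin_pi_tens lin_cmp[symmetric] PH.alg_mulv[OF assms] cmp_def[of x R, symmetric] cmp_def[of g B, symmetric])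
  also have "?E = pi (la ?g (ra (cmp x R) ?g)) ?g (c,k)"
    apply (simp only: pip_def lac_def split_def prod.case M.mul_lin)
    apply (simp only: rac_def split_def M.mul_lin M.mul_lin2)
    apply (simp add: M.ac)
    done
  finally show "cmp (pi x g) (Btilde H rl rr R B) (c,k) = pi (la ?g (ra (cmp x R) ?g)) ?g (c,k)" .
qed

lemma hmult_G: "hmult G (c,h) (d,k) = tens (hmult C c d) (hmult H h k)"
  by (simp add: smash_def)
lemma hone_G: "hone G = tens (hone C) (hone H)"
  by (simp add: smash_def)

lemma alg_pi: assumes "PC.alg x" "PH.alg g" shows "isalg G m one (pi x g)"
proof -
  have "lin (pi x g) (hmult G p q) = m (pi x g p) (pi x g q)" for p q
    by (cases p; cases q) (simp add: hmult_G lin_pi_tens PC.alg_hmult PH.alg_hmult assms M.ac)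
  moreover have "lin (pi x g) (hone G) = one"
    by (simp add: hone_G lin_pi_tens PC.alg_one PH.alg_one assms M.one_l)
  ultimately show ?thesis by (simp add: isalg_def)
qed

lemma mulv_G: "mulv G = tens_alg (mulv C) (mulv H)"
  by (simp add: fun_eq_iff mulv_def tens_alg_def smash_def split_def)

lemma calg_G: "calg (mulv G) (hone G)"
  unfolding mulv_G hone_G by (rule calg_tens_alg[OF C.A.calg_axioms H.A.calg_axioms])

lemma pi_eval1: "PH.alg g \<Longrightarrow> lin (pi x g) (tens (bas c) (hone H)) = x c"
  by (simp add: lin_pi_tens PH.alg_one M.one_r)

lemma decomp: assumes a: "isalg G m one a"
  shows "a = pi (\<lambda>c. lin a (tens (bas c) (hone H))) (\<lambda>k. lin a (tens (hone C) (bas k)))"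
    "PC.alg (\<lambda>c. lin a (tens (bas c) (hone H)))" "PH.alg (\<lambda>k. lin a (tens (hone C) (bas k)))"
proof -
  have CA: "calg m one" by unfold_locales
  have tt: "mulv G (tens u1 u2) (tens v1 v2) = tens (mulv C u1 v1) (mulv H u2 v2)" for u1 u2 v1 v2
    unfolding mulv_G by (rule tens_alg_tens[OF C.A.calg_axioms H.A.calg_axioms])
  have am: "lin a (mulv G u v) = m (lin a u) (lin a v)" for u v by (rule isalg_mulv[OF CA a])
  show "a = pi (\<lambda>c. lin a (tens (bas c) (hone H))) (\<lambda>k. lin a (tens (hone C) (bas k)))"
  proof (rule ext, clarify)
    fix c k
    have "pi (\<lambda>c. lin a (tens (bas c) (hone H))) (\<lambda>k. lin a (tens (hone C) (bas k))) (c,k)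
        = lin a (mulv G (tens (bas c) (hone H)) (tens (hone C) (bas k)))" by (simp add: am)
    also have "\<dots> = a (c,k)" by (simp add: tt C.ax_unit H.ax_unit)
    finally show "a (c,k) = pi (\<lambda>c. lin a (tens (bas c) (hone H))) (\<lambda>k. lin a (tens (hone C) (bas k))) (c,k)" ..
  qed
  have l1: "lin (\<lambda>c. lin a (tens (bas c) (hone H))) v = lin a (tens v (hone H))" for v
    by (simp add: lin_lin[symmetric] tens_lin1[symmetric])
  have l2: "lin (\<lambda>k. lin a (tens (hone C) (bas k))) v = lin a (tens (hone C) v)" for v
    by (simp add: lin_lin[symmetric] tens_lin2[symmetric])
  have o: "lin a (tens (hone C) (hone H)) = one" using isalg_one[OF a] by (simp add: hone_G)
  show "PC.alg (\<lambda>c. lin a (tens (bas c) (hone H)))"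
    unfolding isalg_def l1
    using am[of "tens (bas _) (hone H)" "tens (bas _) (hone H)"] o
    by (simp add: tt H.ax_unit mulv_def[of C "bas _"])
  show "PH.alg (\<lambda>k. lin a (tens (hone C) (bas k)))"
    unfolding isalg_def l2
    using am[of "tens (hone C) (bas _)" "tens (hone C) (bas _)"] o
    by (simp add: tt C.ax_unit mulv_def[of H "bas _"])
qed

end


definition rbvL :: "('b,'k::field) hopf \<Rightarrow> ('b \<Rightarrow> ('b,'k) vec) \<Rightarrow> ('b,'k) vec \<Rightarrow> ('b \<times> 'b,'k) vec"
  where "rbvL X T v = lin (\<lambda>(a,b). tens (T a) (T b)) (comv X v)"
definition rbvR :: "('b,'k::field) hopf \<Rightarrow> ('b \<Rightarrow> ('b,'k) vec) \<Rightarrow> ('b,'k) vec \<Rightarrow> ('b \<times> 'b,'k) vec"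
  where "rbvR X T v = lin (\<lambda>(a,(b,(c,d))). tens (mulv X (bas a) (lin T (mulv X (bas b) (hantipode X d)))) (bas c)) (com3 X (lin T v))"

definition tmult :: "('b,'k::field) hopf \<Rightarrow> ('b \<Rightarrow> ('b,'k) vec) \<Rightarrow> bool"
  where "tmult X T \<longleftrightarrow> (\<forall>x y. lin T (mulv X x y) = mulv X (lin T x) (lin T y)) \<and> lin T (hone X) = hone X"

lemma rb_coop_alt: "rb_coop X T \<longleftrightarrow> tmult X T \<and> (\<forall>v. rbvL X T v = rbvR X T v)"
  unfolding rb_coop_def tmult_def rbvL_def rbvR_def by blast

definition rbpL where "rbpL X m a b T = cv X m (cmp a T) (cmp b T)"
definition rbpR where "rbpR X m a b T = cmp (cv X m a (cv X m (cmp a T) (cv X m b (an X (cmp a T))))) T"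

lemma cv_fun: "cv X m p q = (\<lambda>c. lin (\<lambda>(a,b). m (p a) (q b)) (hcomult X c))"
  by (rule ext) (simp add: cv_def)
lemma an_fun: "an X p = (\<lambda>c. lin p (hantipode X c))"
  by (rule ext) (simp add: an_def)

lemma LamL: assumes "calg m one"
  shows "lin (\<lambda>(p,q). m (a p) (b q)) (rbvL X T (bas c)) = rbpL X m a b T c"
  unfolding rbvL_def rbpL_def
  by (simp add: comv_def lin_lin split_def calg.lin_pair_tens'[OF assms] cv_def cmp_def)

lemma LamR: assumes CA: "calg m one" and a: "isalg X m one a" and T: "tmult X T"
  shows "lin (\<lambda>(p,q). m (a p) (b q)) (rbvR X T (bas c)) = rbpR X m a b T c"
proof -
  have aT: "isalg X m one (cmp a T)" using isalg_cmp[OF CA a] T by (simp add: tmult_def)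
  have e1: "lin a (mulv X (bas p1) (lin T (mulv X (bas p2) (hantipode X p4)))) =
            m (a p1) (m (cmp a T p2) (an X (cmp a T) p4))" for p1 p2 p4
    by (simp add: isalg_mulv[OF CA a] lin_cmp[symmetric] isalg_mulv[OF CA aT] an_def)
  show ?thesis
    unfolding rbvR_def rbpR_def
    apply (simp add: com3_def com2_def comv_def lin_lin split_def calg.lin_pair_tens'[OF CA] e1)
    apply (simp only: cmp_def cv_fun split_def calg.mul_lin2[OF CA] lin_lin)
    apply (simp add: calg.ac[OF CA])
    done
qed


definition i1 :: "('b,'k::field) vec \<Rightarrow> 'a \<Rightarrow> ('a \<times> 'b,'k) vec" where "i1 o2 p = tens (bas p) o2"
definition i2 :: "('a,'k::field) vec \<Rightarrow> 'b \<Rightarrow> ('a \<times> 'b,'k) vec" where "i2 o1 q = tens o1 (bas q)"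

context
  fixes m1 :: "('a,'k::field) vec \<Rightarrow> ('a,'k) vec \<Rightarrow> ('a,'k) vec" and o1
    and m2 :: "('b,'k::field) vec \<Rightarrow> ('b,'k) vec \<Rightarrow> ('b,'k) vec" and o2
  assumes A1: "calg m1 o1" and A2: "calg m2 o2"
begin

lemma i12_bas: "tens_alg m1 m2 (i1 o2 p) (i2 o1 q) = bas (p,q)"
  by (simp add: i1_def i2_def tens_alg_tens[OF A1 A2] calg.one_l[OF A2] calg.one_r[OF A1])

lemma Lam_univ: "lin (\<lambda>(p,q). tens_alg m1 m2 (i1 o2 p) (i2 o1 q)) v = v"
  by (simp add: i12_bas split_def)

lemma alg_i1: "m1 = mulv X \<Longrightarrow> o1 = hone X \<Longrightarrow> isalg X (tens_alg m1 m2) (tens o1 o2) (i1 o2)"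
  unfolding isalg_def i1_def
  using tens_alg_tens[OF A1 A2] calg.one_l[OF A2, of o2]
  by (simp add: tens_lin1[symmetric] mulv_def)

lemma alg_i2: "m2 = mulv Y \<Longrightarrow> o2 = hone Y \<Longrightarrow> isalg Y (tens_alg m1 m2) (tens o1 o2) (i2 o1)"
  unfolding isalg_def i2_def
  using tens_alg_tens[OF A1 A2] calg.one_l[OF A1, of o1]
  by (simp add: tens_lin2[symmetric] mulv_def)

end

lemma rbvL_lin: "rbvL X T v = lin (\<lambda>c. rbvL X T (bas c)) v"
  by (simp add: rbvL_def comv_def lin_lin)
lemma rbvR_lin: "rbvR X T v = lin (\<lambda>c. rbvR X T (bas c)) v"
  by (simp add: rbvR_def com3_def comv_def lin_lin)

lemma rb_from_points:
  assumes CX: "calg (mulv X) (hone X)" and T: "tmult X T"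
    and P: "rbpL X (tens_alg (mulv X) (mulv X)) (i1 (hone X)) (i2 (hone X)) T =
            rbpR X (tens_alg (mulv X) (mulv X)) (i1 (hone X)) (i2 (hone X)) T"
  shows "rb_coop X T"
proof -
  have CA: "calg (tens_alg (mulv X) (mulv X)) (tens (hone X) (hone X))" by (rule calg_tens_alg[OF CX CX])
  have a1: "isalg X (tens_alg (mulv X) (mulv X)) (tens (hone X) (hone X)) (i1 (hone X))"
    by (rule alg_i1[OF CX CX]) simp_all
  have "rbvL X T (bas c) = rbvR X T (bas c)" for c
    using LamL[OF CA, of "i1 (hone X)" "i2 (hone X)" X T c] LamR[OF CA a1 T, of "i2 (hone X)" c] P
    by (simp add: Lam_univ[OF CX CX])
  then have "rbvL X T v = rbvR X T v" for v by (subst rbvL_lin, subst rbvR_lin) simp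
  with T show ?thesis by (simp add: rb_coop_alt)
qed

lemma points_from_rb:
  assumes "rb_coop X T" "calg m one" "isalg X m one a"
  shows "rbpL X m a b T = rbpR X m a b T"
proof
  fix c
  from assms(1) have T: "tmult X T" and E: "rbvL X T (bas c) = rbvR X T (bas c)" by (auto simp: rb_coop_alt)
  show "rbpL X m a b T c = rbpR X m a b T c"
    using LamL[OF assms(2), of a b X T c] LamR[OF assms(2,3) T, of b c] E by simp
qed


context bic
begin

lemma Lam2L: assumes "PH.alg g" "PH.alg (cmp g B)"
  shows "lin (\<lambda>(u,v). m (g u) (y v))
     (lin (\<lambda>(p,q). lin (\<lambda>(s,t). lin (\<lambda>(a,b).
           tens (mulv H (bas a) (lin B (mulv H (bas b) (hantipode H q)))) (bas t))
         (hcomult H s)) (rl p)) (lin rr (lin R (bas c))))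
   = cmp (ra (la (PH.conv g (cmp g B)) y) (PH.iv (cmp g B))) R c"
proof -
  have e1: "lin g (mulv H (bas a) (lin B (mulv H (bas b) (hantipode H q)))) = m (g a) (m (cmp g B b) (PH.iv (cmp g B) q))" for a b q
    by (simp add: PH.alg_mulv assms lin_cmp[symmetric] an_def)
  show ?thesis
    apply (simp add: lin_lin split_def PH.lin_pair_tens' e1)
    apply (simp only: cmp_def[of "ra _ _" R])
    apply (simp only: ra_fun lin_lin split_def prod.case)
    apply (simp only: lac_def split_def M.mul_lin)
    apply (simp only: cv_def split_def M.mul_lin)
    apply (simp add: M.ac)
    done
qed

lemma Lam2R:
  shows "lin (\<lambda>(u,v). m (g u) (y v)) (lin (\<lambda>(p,q). tens (lin B (hantipode H q)) (R p)) (lin rr (bas c)))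
   = ra (cmp y R) (PH.iv (cmp g B)) c"
  by (simp add: lin_lin split_def PH.lin_pair_tens' cmp_fun[of g B, symmetric] an_def[of H "cmp g B", symmetric] rac_def cmp_def[of y R, symmetric] M.ac)

lemma Lam1L: assumes "PC.alg x" "PC.alg (cmp x R)" "PH.alg h"
  shows "lin (\<lambda>(u,v,w). m (x u) (m (y v) (h w)))
     (lin (\<lambda>(p,(q,r)). lin (\<lambda>(p0,p1). lin (\<lambda>(a,b). lin (\<lambda>(s,t).
           tens (mulv C (bas a) (lin R (mulv C (bas b) (hantipode C t)))) (tens (bas q) (hmult H p1 s)))
         (rl r)) (hcomult C p0)) (rr p)) (com2 C (lin R (bas c))))
   = cmp (PC.conv (ra (PC.conv x (cmp x R)) h) (PC.conv y (la h (PC.iv (cmp x R))))) R c"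
proof -
  have e1: "lin x (mulv C (bas a) (lin R (mulv C (bas b) (hantipode C t)))) = m (x a) (m (cmp x R b) (PC.iv (cmp x R) t))" for a b t
    by (simp add: PC.alg_mulv assms lin_cmp[symmetric] an_def)
  show ?thesis
    apply (simp add: com2_def comv_def lin_lin split_def M.lin_triple_tens' e1 PH.alg_hmult assms)
    apply (simp only: cmp_def[of "cv C m _ _" R])
    apply (simp only: PC.lin_conv comv_def lin_lin split_def prod.case)
    apply (simp only: cv_def[of C m y] split_def M.mul_lin2)
    apply (simp only: rac_def split_def M.mul_lin)
    apply (simp only: cv_def[of C m x] split_def M.mul_lin)
    apply (simp only: lac_def split_def M.mul_lin2)
    apply (simp add: M.ac)
    done
qed

lemma Lam1R:
  shows "lin (\<lambda>(u,v,w). m (x u) (m (y v) (h w)))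
    (lin (\<lambda>(a,b). lin (\<lambda>(s,t). tens (R t) (tens (R b) (lin B (hantipode H s)))) (rl a)) (comv C (bas c)))
   = PC.conv (la (PH.iv (cmp h B)) (cmp x R)) (cmp y R) c"
  apply (simp add: comv_def lin_lin split_def M.lin_triple_tens' cmp_fun[of h B, symmetric] an_def[of H "cmp h B", symmetric]
      cmp_def[of x R, symmetric] cmp_def[of y R, symmetric])
  apply (simp only: cv_def split_def M.mul_lin lac_def)
  apply (simp add: M.ac)
  done

end


context bic
begin

lemma la_cancel1: "PH.alg g \<Longrightarrow> la g (la (PH.iv g) x) = x"
  by (simp add: la_conv[symmetric] PH.conv_inv_r la_e)
lemma la_cancel2: "PH.alg g \<Longrightarrow> la (PH.iv g) (la g x) = x"
  by (simp add: la_conv[symmetric] PH.conv_inv_l la_e)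
lemma ra_cancel1: "PH.alg g \<Longrightarrow> ra (ra x g) (PH.iv g) = x"
  by (simp add: ra_conv[symmetric] PH.conv_inv_r ra_e)
lemma ra_cancel2: "PH.alg g \<Longrightarrow> ra (ra x (PH.iv g)) g = x"
  by (simp add: ra_conv[symmetric] PH.conv_inv_l ra_e)

lemmas gsimps = la_conv ra_conv la_e ra_e la_convC ra_convC la_eC ra_eC ra_la
  la_cancel1 la_cancel2 ra_cancel1 ra_cancel2 la_iv[symmetric] ra_iv[symmetric]
  PH.conv_assoc PC.conv_assoc PH.conv_inv_r PH.conv_inv_l PC.conv_inv_r PC.conv_inv_l
  PH.conv_cancel1 PH.conv_cancel2 PC.conv_cancel1 PC.conv_cancel2
  PH.inv_conv PC.inv_conv PH.inv_inv PC.inv_inv PH.inv_e PC.inv_e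
  PH.alg_conv PH.alg_inv PH.alg_e PC.alg_conv PC.alg_inv PC.alg_e alg_la alg_ra

lemma core_K:
  assumes x: "PC.alg x" and y: "PC.alg y" and g: "PH.alg g" and h: "PH.alg h"
    and Balg: "\<And>g. PH.alg g \<Longrightarrow> PH.alg (cmp g B)"
    and Ralg: "\<And>x. PC.alg x \<Longrightarrow> PC.alg (cmp x R)"
    and C1: "\<And>x y h. PC.alg x \<Longrightarrow> PC.alg y \<Longrightarrow> PH.alg h \<Longrightarrow>
       cmp (PC.conv (ra (PC.conv x (cmp x R)) h) (PC.conv y (la h (PC.iv (cmp x R))))) R
       = PC.conv (la (PH.iv (cmp h B)) (cmp x R)) (cmp y R)"
    and C2: "\<And>g y. PH.alg g \<Longrightarrow> PC.alg y \<Longrightarrow>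
       cmp (ra (la (PH.conv g (cmp g B)) y) (PH.iv (cmp g B))) R = ra (cmp y R) (PH.iv (cmp g B))"
  defines "\<gamma> \<equiv> cmp g B" and "\<delta> \<equiv> cmp h B"
  defines "u \<equiv> la \<gamma> (ra (cmp x R) \<gamma>)"
  shows "cmp (PC.conv (ra x (PH.conv \<gamma> (PH.conv h (PH.iv \<gamma>))))
             (la g (PC.conv (ra u (PH.conv h (PH.iv \<gamma>)))
                (la \<gamma> (PC.conv (ra y (PH.iv \<gamma>)) (la h (la (PH.iv \<gamma>) (ra (PC.iv u) (PH.iv \<gamma>))))))))) R
       = PC.conv (la (PH.iv \<delta>) (cmp x R)) (ra (cmp y R) (PH.iv \<gamma>))"
proof -
  have ga: "PH.alg \<gamma>" "PH.alg \<delta>" unfolding \<gamma>_def \<delta>_def using Balg g h by auto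
  have rx: "PC.alg (cmp x R)" using Ralg x by auto
  define k0 where "k0 = PH.conv g \<gamma>"
  have k0: "PH.alg k0" unfolding k0_def using g ga by (simp add: PH.alg_conv)
  define x' where "x' = la (PH.iv k0) (ra x \<gamma>)"
  have x': "PC.alg x'" unfolding x'_def using k0 ga x by (simp add: gsimps)
  have ex: "ra (la k0 x') (PH.iv \<gamma>) = x" unfolding x'_def using k0 ga by (simp add: gsimps)
  have rx'0: "cmp x R = ra (cmp x' R) (PH.iv \<gamma>)"
    using C2[OF g x'] ex unfolding k0_def \<gamma>_def by simp
  have rx': "cmp x' R = ra (cmp x R) \<gamma>"
    using rx'0 ga by (simp add: gsimps)
  have rx'a: "PC.alg (cmp x' R)" using Ralg x' by auto
  define X where "X = PC.conv (ra (PC.conv x' (cmp x' R)) h) (PC.conv y (la h (PC.iv (cmp x' R))))"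
  have Xa: "PC.alg X" unfolding X_def using x' rx'a y h by (simp add: gsimps)
  have rX: "cmp X R = PC.conv (la (PH.iv \<delta>) (cmp x' R)) (cmp y R)"
    unfolding X_def \<delta>_def by (rule C1[OF x' y h])
  have fx: "la g (la \<gamma> (ra (ra x' h) (PH.iv \<gamma>))) = ra (ra (ra x \<gamma>) h) (PH.iv \<gamma>)"
    unfolding x'_def k0_def using g ga by (simp add: gsimps)
  have zX: "PC.conv (ra x (PH.conv \<gamma> (PH.conv h (PH.iv \<gamma>))))
             (la g (PC.conv (ra u (PH.conv h (PH.iv \<gamma>)))
                (la \<gamma> (PC.conv (ra y (PH.iv \<gamma>)) (la h (la (PH.iv \<gamma>) (ra (PC.iv u) (PH.iv \<gamma>)))))))) =
            ra (la k0 X) (PH.iv \<gamma>)"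
    unfolding X_def rx' u_def k0_def using x y g h ga rx x' by (simp add: gsimps fx)
  have "cmp (ra (la k0 X) (PH.iv \<gamma>)) R = ra (cmp X R) (PH.iv \<gamma>)"
    using C2[OF g Xa] unfolding k0_def \<gamma>_def by simp
  then show ?thesis
    unfolding zX rX rx' using ga rx y Ralg by (simp add: gsimps)
qed

lemma core_RB:
  assumes x: "PC.alg x" and y: "PC.alg y" and g: "PH.alg g" and h: "PH.alg h"
    and Balg: "\<And>g. PH.alg g \<Longrightarrow> PH.alg (cmp g B)"
    and Ralg: "\<And>x. PC.alg x \<Longrightarrow> PC.alg (cmp x R)"
    and C1: "\<And>x y h. PC.alg x \<Longrightarrow> PC.alg y \<Longrightarrow> PH.alg h \<Longrightarrow>
       cmp (PC.conv (ra (PC.conv x (cmp x R)) h) (PC.conv y (la h (PC.iv (cmp x R))))) R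
       = PC.conv (la (PH.iv (cmp h B)) (cmp x R)) (cmp y R)"
    and C2: "\<And>g y. PH.alg g \<Longrightarrow> PC.alg y \<Longrightarrow>
       cmp (ra (la (PH.conv g (cmp g B)) y) (PH.iv (cmp g B))) R = ra (cmp y R) (PH.iv (cmp g B))"
    and RBB: "\<And>g h. PH.alg g \<Longrightarrow> PH.alg h \<Longrightarrow> rbpL H m g h B = rbpR H m g h B"
  shows "rbpL G m (pi x g) (pi y h) (Btilde H rl rr R B) = rbpR G m (pi x g) (pi y h) (Btilde H rl rr R B)"
proof -
  have ga: "PH.alg (cmp g B)" "PH.alg (cmp h B)" using Balg g h by auto
  have rx: "PC.alg (cmp x R)" "PC.alg (cmp y R)" using Ralg x y by auto
  have K: "cmp (PH.conv g (PH.conv (cmp g B) (PH.conv h (PH.iv (cmp g B))))) B = PH.conv (cmp g B) (cmp h B)"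
    using RBB[OF g h] by (simp add: rbpL_def rbpR_def)
  note CK = core_K[OF x y g h Balg Ralg C1 C2]
  show ?thesis
    unfolding rbpL_def rbpR_def
    using ga rx x y g h CK K
    by (simp add: pi_B pi_an pi_conv gsimps Balg)
qed

lemma pi_eq: "PH.alg g \<Longrightarrow> (pi x g = pi x' g) = (x = x')"
  by (metis pi_eval1 ext)

lemma fwd_R:
  assumes TG: "\<And>a b. isalg G m one a \<Longrightarrow> isalg G m one b \<Longrightarrow> rbpL G m a b (Btilde H rl rr R B) = rbpR G m a b (Btilde H rl rr R B)"
    and BE: "cmp PH.e B = PH.e" and x: "PC.alg x" and y: "PC.alg y"
  shows "rbpL C m x y R = rbpR C m x y R"
proof -
  have "rbpL G m (pi x PH.e) (pi y PH.e) (Btilde H rl rr R B) = rbpR G m (pi x PH.e) (pi y PH.e) (Btilde H rl rr R B)"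
    by (rule TG) (simp_all add: alg_pi x y PH.alg_e)
  then show ?thesis
    unfolding rbpL_def rbpR_def using BE
    by (simp add: pi_B pi_an pi_conv gsimps pi_eq)
qed

lemma fwd_C2:
  assumes TG: "\<And>a b. isalg G m one a \<Longrightarrow> isalg G m one b \<Longrightarrow> rbpL G m a b (Btilde H rl rr R B) = rbpR G m a b (Btilde H rl rr R B)"
    and BE: "cmp PH.e B = PH.e" and RE: "cmp PC.e R = PC.e"
    and Balg: "\<And>g. PH.alg g \<Longrightarrow> PH.alg (cmp g B)"
    and Ralg: "\<And>x. PC.alg x \<Longrightarrow> PC.alg (cmp x R)"
    and g: "PH.alg g" and y: "PC.alg y"
  shows "cmp (ra (la (PH.conv g (cmp g B)) y) (PH.iv (cmp g B))) R = ra (cmp y R) (PH.iv (cmp g B))"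
proof -
  have ga: "PH.alg (cmp g B)" using Balg g by auto
  have ry: "PC.alg (cmp y R)" using Ralg y by auto
  have "rbpL G m (pi PC.e g) (pi y PH.e) (Btilde H rl rr R B) = rbpR G m (pi PC.e g) (pi y PH.e) (Btilde H rl rr R B)"
    by (rule TG) (simp_all add: alg_pi y g PH.alg_e PC.alg_e)
  then have E1: "la (cmp g B) (cmp y R) = la (cmp g B) (ra (cmp (la g (la (cmp g B) (ra y (PH.iv (cmp g B))))) R) (cmp g B))"
    unfolding rbpL_def rbpR_def using BE RE ga ry g y
    by (simp add: pi_B pi_an pi_conv gsimps pi_eq Balg)
  then have "cmp y R = ra (cmp (la g (la (cmp g B) (ra y (PH.iv (cmp g B))))) R) (cmp g B)"
    by (metis la_cancel2 ga)
  then have "ra (cmp y R) (PH.iv (cmp g B)) = cmp (la g (la (cmp g B) (ra y (PH.iv (cmp g B))))) R"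
    using ga by (simp add: ra_cancel1)
  then show ?thesis using g ga by (simp add: gsimps)
qed

lemma fwd_C1:
  assumes TG: "\<And>a b. isalg G m one a \<Longrightarrow> isalg G m one b \<Longrightarrow> rbpL G m a b (Btilde H rl rr R B) = rbpR G m a b (Btilde H rl rr R B)"
    and BE: "cmp PH.e B = PH.e"
    and Balg: "\<And>g. PH.alg g \<Longrightarrow> PH.alg (cmp g B)"
    and Ralg: "\<And>x. PC.alg x \<Longrightarrow> PC.alg (cmp x R)"
    and x: "PC.alg x" and y: "PC.alg y" and h: "PH.alg h"
  shows "cmp (PC.conv (ra (PC.conv x (cmp x R)) h) (PC.conv y (la h (PC.iv (cmp x R))))) R
       = PC.conv (la (PH.iv (cmp h B)) (cmp x R)) (cmp y R)"
proof -
  have ha: "PH.alg (cmp h B)" using Balg h by auto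
  have rx: "PC.alg (cmp x R)" "PC.alg (cmp y R)" using Ralg x y by auto
  have "rbpL G m (pi x PH.e) (pi y h) (Btilde H rl rr R B) = rbpR G m (pi x PH.e) (pi y h) (Btilde H rl rr R B)"
    by (rule TG) (simp_all add: alg_pi x y h PH.alg_e)
  then have E1: "PC.conv (ra (cmp x R) (cmp h B)) (la (cmp h B) (ra (cmp y R) (cmp h B))) =
     la (cmp h B) (ra (cmp (PC.conv (ra x h) (PC.conv (ra (cmp x R) h) (PC.conv y (la h (PC.iv (cmp x R)))))) R) (cmp h B))"
    unfolding rbpL_def rbpR_def using BE ha rx h x y
    by (simp add: pi_B pi_an pi_conv gsimps pi_eq Balg)
  then have "la (PH.iv (cmp h B)) (ra (PC.conv (ra (cmp x R) (cmp h B)) (la (cmp h B) (ra (cmp y R) (cmp h B)))) (PH.iv (cmp h B)))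
     = cmp (PC.conv (ra x h) (PC.conv (ra (cmp x R) h) (PC.conv y (la h (PC.iv (cmp x R)))))) R"
    using ha by (simp add: la_cancel2 ra_cancel1 ra_la)
  then show ?thesis using ha rx h x y by (simp add: gsimps)
qed

end


context pts
begin

lemma tmult_alg: "tmult X T \<Longrightarrow> alg p \<Longrightarrow> alg (cmp p T)"
  by (auto simp: tmult_def intro: isalg_cmp[OF M.calg_axioms])

lemma rb_alg: "rb_coop X T \<Longrightarrow> alg p \<Longrightarrow> alg (cmp p T)"
  by (simp add: rb_coop_alt tmult_alg)

lemma rb_e: assumes "rb_coop X T" shows "cmp e T = e"
proof -
  have a: "alg (cmp e T)" by (rule rb_alg[OF assms alg_e])
  have "rbpL X m e e T = rbpR X m e e T" by (rule points_from_rb[OF assms M.calg_axioms alg_e])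
  then have "conv (cmp e T) (cmp e T) = cmp e T"
    by (simp add: rbpL_def rbpR_def conv_inv_r[OF a])
  then have "conv (iv (cmp e T)) (conv (cmp e T) (cmp e T)) = conv (iv (cmp e T)) (cmp e T)" by simp
  then show ?thesis by (simp add: conv_cancel2[OF a] conv_inv_l[OF a])
qed

end

context bic
begin

lemma C1_of_vec:
  assumes V: "\<And>c. cond1 H C rl rr R B c" and x: "PC.alg x" "PC.alg (cmp x R)" and h: "PH.alg h"
  shows "cmp (PC.conv (ra (PC.conv x (cmp x R)) h) (PC.conv y (la h (PC.iv (cmp x R))))) R
       = PC.conv (la (PH.iv (cmp h B)) (cmp x R)) (cmp y R)"
proof
  fix c
  show "cmp (PC.conv (ra (PC.conv x (cmp x R)) h) (PC.conv y (la h (PC.iv (cmp x R))))) R c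
       = PC.conv (la (PH.iv (cmp h B)) (cmp x R)) (cmp y R) c"
    using V[of "bas c", unfolded cond1_def] Lam1L[OF x h, where y=y and c=c] Lam1R[where x=x and y=y and h=h and c=c and R=R and B=B] by simp
qed

lemma C2_of_vec:
  assumes V: "\<And>c. cond2 H rl rr R B c" and g: "PH.alg g" "PH.alg (cmp g B)"
  shows "cmp (ra (la (PH.conv g (cmp g B)) y) (PH.iv (cmp g B))) R = ra (cmp y R) (PH.iv (cmp g B))"
proof
  fix c
  show "cmp (ra (la (PH.conv g (cmp g B)) y) (PH.iv (cmp g B))) R c = ra (cmp y R) (PH.iv (cmp g B)) c"
    using V[of "bas c", unfolded cond2_def] Lam2L[OF g, where y=y and c=c and R=R] Lam2R[where g=g and y=y and c=c and R=R and B=B] by simp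
qed

end


lemma alg_bas: "isalg X (mulv X) (hone X) bas"
  by (simp add: isalg_def mulv_def)

lemma tmult_of_alg: "calg (mulv X) (hone X) \<Longrightarrow> isalg X (mulv X) (hone X) T \<Longrightarrow> tmult X T"
  by (simp add: tmult_def isalg_mulv isalg_one)

lemma cmp_bas: "cmp bas T = T"
  by (rule ext) (simp add: cmp_def)

lemma alg_lift2:
  assumes A1: "calg m1 o1" and A2: "calg m2 o2" and q: "isalg Y m2 o2 q"
  shows "isalg Y (tens_alg m1 m2) (tens o1 o2) (\<lambda>v. tens o1 (q v))"
  unfolding isalg_def using q
  by (simp add: tens_lin2[symmetric] tens_alg_tens[OF A1 A2] calg.one_l[OF A1] isalg_def)

lemma alg_lift1:
  assumes A1: "calg m1 o1" and A2: "calg m2 o2" and q: "isalg Y m1 o1 q"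
  shows "isalg Y (tens_alg m1 m2) (tens o1 o2) (\<lambda>v. tens (q v) o2)"
  unfolding isalg_def using q
  by (simp add: tens_lin1[symmetric] tens_alg_tens[OF A1 A2] calg.one_l[OF A2] isalg_def)

lemma cond1_lin:
  fixes H :: "('h,'k::field) hopf" and C :: "('c,'k) hopf"
    and rl :: "'c \<Rightarrow> ('h \<times> 'c,'k) vec" and rr :: "'c \<Rightarrow> ('c \<times> 'h,'k) vec"
    and R :: "'c \<Rightarrow> ('c,'k) vec" and B :: "'h \<Rightarrow> ('h,'k) vec"
  assumes a: "\<And>c0. cond1 H C rl rr R B (bas c0)"
  shows "cond1 H C rl rr R B c"
proof -
  have e: "lin F (com2 C (lin R c)) = lin (\<lambda>c0. lin F (com2 C (R c0))) c" for F :: "'c \<times> 'c \<times> 'c \<Rightarrow> ('c \<times> 'c \<times> 'h,'k::field) vec"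
    by (simp add: com2_def comv_def lin_lin)
  have e2: "lin F (comv C c) = lin (\<lambda>c0. lin F (comv C (bas c0))) c" for F :: "'c \<times> 'c \<Rightarrow> ('c \<times> 'c \<times> 'h,'k::field) vec"
    by (simp add: comv_def lin_lin)
  show ?thesis using a unfolding cond1_def by (subst e, subst e2) simp
qed

lemma cond2_lin:
  fixes H :: "('h,'k::field) hopf" and C :: "('c,'k) hopf"
    and rl :: "'c \<Rightarrow> ('h \<times> 'c,'k) vec" and rr :: "'c \<Rightarrow> ('c \<times> 'h,'k) vec"
    and R :: "'c \<Rightarrow> ('c,'k) vec" and B :: "'h \<Rightarrow> ('h,'k) vec"
  assumes a: "\<And>c0. cond2 H rl rr R B (bas c0)"
  shows "cond2 H rl rr R B c"
proof -
  have e: "lin F (lin rr (lin R c)) = lin (\<lambda>c0. lin F (lin rr (R c0))) c" for F :: "'c \<times> 'h \<Rightarrow> ('h \<times> 'c,'k::field) vec"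
    by (simp add: lin_lin)
  have e2: "lin F (lin rr c) = lin (\<lambda>c0. lin F (rr c0)) c" for F :: "'c \<times> 'h \<Rightarrow> ('h \<times> 'c,'k::field) vec"
    by (simp add: lin_lin)
  show ?thesis using a unfolding cond2_def by (subst e, subst e2) simp
qed


theorem theorem3p3:
  fixes H :: "('h,'k::field) hopf" and C :: "('c,'k) hopf"
    and rl :: "'c \<Rightarrow> ('h \<times> 'c,'k) vec" and rr :: "'c \<Rightarrow> ('c \<times> 'h,'k) vec"
    and R :: "'c \<Rightarrow> ('c,'k) vec" and B :: "'h \<Rightarrow> ('h,'k) vec"
  assumes "comm_hopf H" and "comm_hopf C" and "bicomod_hopf H C rl rr"
    and "rb_coop H B"
  shows "rb_coop (smash H C rl rr) (Btilde H rl rr R B) \<longleftrightarrow>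
         rb_coop C R \<and> (\<forall>c. cond1 H C rl rr R B c) \<and> (\<forall>c. cond2 H rl rr R B c)"
proof -
  note rbB = assms(4)
  interpret B0: bic0 H C rl rr
    using assms(1-3) by (simp add: bic0_def bic0_axioms_def chopf_def)
  have cC: "calg (mulv C) (hone C)" by (rule B0.C.A.calg_axioms)
  have cH: "calg (mulv H) (hone H)" by (rule B0.H.A.calg_axioms)
  interpret BC: bic H C rl rr "mulv C" "hone C"
    by (intro bic.intro B0.bic0_axioms cC)
  let ?G = "smash H C rl rr"
  let ?T = "Btilde H rl rr R B"
  have cG: "calg (mulv ?G) (hone ?G)" by (rule BC.calg_G)
  have cHC: "calg (tens_alg (mulv H) (mulv C)) (tens (hone H) (hone C))" by (rule calg_tens_alg[OF cH cC])
  have cCC: "calg (tens_alg (mulv C) (mulv C)) (tens (hone C) (hone C))" by (rule calg_tens_alg[OF cC cC])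
  have cCH: "calg (tens_alg (mulv C) (mulv H)) (tens (hone C) (hone H))" by (rule calg_tens_alg[OF cC cH])
  have cCCH: "calg (tens_alg (mulv C) (tens_alg (mulv C) (mulv H))) (tens (hone C) (tens (hone C) (hone H)))"
    by (rule calg_tens_alg[OF cC cCH])
  have cGG: "calg (tens_alg (mulv ?G) (mulv ?G)) (tens (hone ?G) (hone ?G))" by (rule calg_tens_alg[OF cG cG])
  show ?thesis
  proof
    assume RBG: "rb_coop ?G ?T"
    have TGm: "tmult ?G ?T" using RBG by (simp add: rb_coop_alt)
    have tR: "tmult C R"
    proof -
      have BE: "cmp BC.PH.e B = BC.PH.e" by (rule BC.PH.rb_e[OF rbB])
      have a: "isalg ?G (mulv C) (hone C) (BC.pi bas BC.PH.e)"
        by (rule BC.alg_pi) (simp_all add: alg_bas BC.PH.alg_e)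
      have "isalg ?G (mulv C) (hone C) (cmp (BC.pi bas BC.PH.e) ?T)"
        using isalg_cmp[OF cC a] TGm by (simp add: tmult_def)
      moreover have "cmp (BC.pi bas BC.PH.e) ?T = BC.pi (cmp bas R) BC.PH.e"
        using BE BC.PH.alg_e by (simp add: BC.pi_B BC.la_e BC.ra_e)
      ultimately have "isalg ?G (mulv C) (hone C) (BC.pi (cmp bas R) BC.PH.e)" by simp
      from BC.decomp(2)[OF this] have "isalg C (mulv C) (hone C) (cmp bas R)"
        by (simp add: BC.pi_eval1 BC.PH.alg_e)
      then show ?thesis by (simp add: cmp_bas tmult_of_alg[OF cC])
    qed
    interpret U2: bic H C rl rr "tens_alg (mulv C) (mulv C)" "tens (hone C) (hone C)"
      by (intro bic.intro B0.bic0_axioms cCC)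
    have rbC: "rb_coop C R"
    proof (rule rb_from_points[OF cC tR])
      show "rbpL C (tens_alg (mulv C) (mulv C)) (i1 (hone C)) (i2 (hone C)) R =
            rbpR C (tens_alg (mulv C) (mulv C)) (i1 (hone C)) (i2 (hone C)) R"
        by (rule U2.fwd_R[OF points_from_rb[OF RBG cCC] U2.PH.rb_e[OF rbB]])
          (simp_all add: alg_i1[OF cC cC] alg_i2[OF cC cC])
    qed
    interpret U3: bic H C rl rr "tens_alg (mulv H) (mulv C)" "tens (hone H) (hone C)"
      by (intro bic.intro B0.bic0_axioms cHC)
    have c2: "cond2 H rl rr R B c" for c
    proof (rule cond2_lin)
      fix c0
      let ?g = "i1 (hone C) :: 'h \<Rightarrow> ('h \<times> 'c,'k) vec" and ?y = "i2 (hone H) :: 'c \<Rightarrow> ('h \<times> 'c,'k) vec"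
      have g: "U3.PH.alg ?g" by (simp add: alg_i1[OF cH cC])
      have y: "U3.PC.alg ?y" by (simp add: alg_i2[OF cH cC])
      have ga: "U3.PH.alg (cmp ?g B)" by (rule U3.PH.rb_alg[OF rbB g])
      have P: "cmp (U3.ra (U3.la (U3.PH.conv ?g (cmp ?g B)) ?y) (U3.PH.iv (cmp ?g B))) R = U3.ra (cmp ?y R) (U3.PH.iv (cmp ?g B))"
        by (rule U3.fwd_C2[OF points_from_rb[OF RBG cHC] U3.PH.rb_e[OF rbB] U3.PC.rb_e[OF rbC]
             U3.PH.rb_alg[OF rbB] U3.PC.rb_alg[OF rbC] g y])
      show "cond2 H rl rr R B (bas c0)"
        unfolding cond2_def
        using U3.Lam2L[OF g ga, where y="?y" and c=c0 and R=R] U3.Lam2R[where g="?g" and y="?y" and c=c0 and R=R and B=B] P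
        by (simp add: Lam_univ[OF cH cC])
    qed
    interpret U4: bic H C rl rr "tens_alg (mulv C) (tens_alg (mulv C) (mulv H))" "tens (hone C) (tens (hone C) (hone H))"
      by (intro bic.intro B0.bic0_axioms cCCH)
    have c1: "cond1 H C rl rr R B c" for c
    proof (rule cond1_lin)
      fix c0
      let ?A = "tens_alg (mulv C) (tens_alg (mulv C) (mulv H))"
      let ?x = "i1 (tens (hone C) (hone H)) :: 'c \<Rightarrow> ('c \<times> 'c \<times> 'h,'k) vec"
      let ?y = "\<lambda>v. tens (hone C) (i1 (hone H) v) :: ('c \<times> 'c \<times> 'h,'k) vec"
      let ?h = "\<lambda>w. tens (hone C) (i2 (hone C) w) :: ('c \<times> 'c \<times> 'h,'k) vec"
      have x: "U4.PC.alg ?x" by (simp add: alg_i1[OF cC cCH])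
      have y: "U4.PC.alg ?y" by (rule alg_lift2[OF cC cCH alg_i1[OF cC cH]]) simp_all
      have h: "U4.PH.alg ?h" by (rule alg_lift2[OF cC cCH alg_i2[OF cC cH]]) simp_all
      have rx: "U4.PC.alg (cmp ?x R)" by (rule U4.PC.rb_alg[OF rbC x])
      have ha: "U4.PH.alg (cmp ?h B)" by (rule U4.PH.rb_alg[OF rbB h])
      have P: "cmp (U4.PC.conv (U4.ra (U4.PC.conv ?x (cmp ?x R)) ?h) (U4.PC.conv ?y (U4.la ?h (U4.PC.iv (cmp ?x R))))) R
       = U4.PC.conv (U4.la (U4.PH.iv (cmp ?h B)) (cmp ?x R)) (cmp ?y R)"
        by (rule U4.fwd_C1[OF points_from_rb[OF RBG cCCH] U4.PH.rb_e[OF rbB]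
             U4.PH.rb_alg[OF rbB] U4.PC.rb_alg[OF rbC] x y h])
      have Lid: "lin (\<lambda>(u,v,w). ?A (?x u) (?A (?y v) (?h w))) V = V" for V
      proof -
        have "?A (?x u) (?A (?y v) (?h w)) = bas (u,(v,w))" for u v w
          by (simp add: i1_def i2_def tens_alg_tens[OF cC cCH] tens_alg_tens[OF cC cH] calg.one_l[OF cC]
              calg.one_r[OF cC] calg.one_l[OF cH] calg.one_r[OF cH] calg.one_l[OF cCH] flip: tens_bas)
        then show ?thesis by (simp add: split_def)
      qed
      show "cond1 H C rl rr R B (bas c0)"
        unfolding cond1_def
        using U4.Lam1L[OF x rx h, where y="?y" and c=c0] U4.Lam1R[where x="?x" and y="?y" and h="?h" and c=c0 and R=R and B=B] P
        by (simp only: Lid)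
    qed
    show "rb_coop C R \<and> (\<forall>c. cond1 H C rl rr R B c) \<and> (\<forall>c. cond2 H rl rr R B c)"
      using rbC c1 c2 by blast
  next
    assume asm: "rb_coop C R \<and> (\<forall>c. cond1 H C rl rr R B c) \<and> (\<forall>c. cond2 H rl rr R B c)"
    then have rbC: "rb_coop C R" and C1v: "\<And>c. cond1 H C rl rr R B c" and C2v: "\<And>c. cond2 H rl rr R B c" by auto
    have tR: "tmult C R" using rbC by (simp add: rb_coop_alt)
    interpret UG: bic H C rl rr "mulv ?G" "hone ?G"
      by (intro bic.intro B0.bic0_axioms cG)
    have tG: "tmult ?G ?T"
    proof -
      have ab: "isalg ?G (mulv ?G) (hone ?G) bas" by (rule alg_bas)
      note D = UG.decomp[OF ab]
      let ?xC = "\<lambda>c. lin bas (tens (bas c) (hone H)) :: ('c \<times> 'h,'k) vec"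
      let ?gH = "\<lambda>k. lin bas (tens (hone C) (bas k)) :: ('c \<times> 'h,'k) vec"
      have ga: "UG.PH.alg (cmp ?gH B)" by (rule UG.PH.rb_alg[OF rbB D(3)])
      have "?T = cmp (UG.pi ?xC ?gH) ?T" using D(1) by (simp add: cmp_bas)
      also have "\<dots> = UG.pi (UG.la (cmp ?gH B) (UG.ra (cmp ?xC R) (cmp ?gH B))) (cmp ?gH B)"
        by (rule UG.pi_B[OF ga])
      finally have "isalg ?G (mulv ?G) (hone ?G) ?T"
        using UG.alg_pi UG.alg_la UG.alg_ra ga UG.PC.tmult_alg[OF tR D(2)] by metis
      then show ?thesis by (rule tmult_of_alg[OF cG])
    qed
    interpret U5: bic H C rl rr "tens_alg (mulv ?G) (mulv ?G)" "tens (hone ?G) (hone ?G)"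
      by (intro bic.intro B0.bic0_axioms cGG)
    show "rb_coop ?G ?T"
    proof (rule rb_from_points[OF cG tG])
      have a1: "isalg ?G (tens_alg (mulv ?G) (mulv ?G)) (tens (hone ?G) (hone ?G)) (i1 (hone ?G))"
        by (simp add: alg_i1[OF cG cG])
      have a2: "isalg ?G (tens_alg (mulv ?G) (mulv ?G)) (tens (hone ?G) (hone ?G)) (i2 (hone ?G))"
        by (simp add: alg_i2[OF cG cG])
      note D1 = U5.decomp[OF a1] and D2 = U5.decomp[OF a2]
      have Ralg: "\<And>x. U5.PC.alg x \<Longrightarrow> U5.PC.alg (cmp x R)" by (rule U5.PC.tmult_alg[OF tR])
      have Balg: "\<And>g. U5.PH.alg g \<Longrightarrow> U5.PH.alg (cmp g B)" by (rule U5.PH.rb_alg[OF rbB])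
      have "rbpL ?G (tens_alg (mulv ?G) (mulv ?G)) (U5.pi (\<lambda>c. lin (i1 (hone ?G)) (tens (bas c) (hone H))) (\<lambda>k. lin (i1 (hone ?G)) (tens (hone C) (bas k))))
                 (U5.pi (\<lambda>c. lin (i2 (hone ?G)) (tens (bas c) (hone H))) (\<lambda>k. lin (i2 (hone ?G)) (tens (hone C) (bas k)))) ?T =
            rbpR ?G (tens_alg (mulv ?G) (mulv ?G)) (U5.pi (\<lambda>c. lin (i1 (hone ?G)) (tens (bas c) (hone H))) (\<lambda>k. lin (i1 (hone ?G)) (tens (hone C) (bas k))))
                 (U5.pi (\<lambda>c. lin (i2 (hone ?G)) (tens (bas c) (hone H))) (\<lambda>k. lin (i2 (hone ?G)) (tens (hone C) (bas k)))) ?T"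
      proof (rule U5.core_RB[OF D1(2) D2(2) D1(3) D2(3) Balg Ralg])
        show "cmp (U5.PC.conv (U5.ra (U5.PC.conv x (cmp x R)) h) (U5.PC.conv y (U5.la h (U5.PC.iv (cmp x R))))) R
          = U5.PC.conv (U5.la (U5.PH.iv (cmp h B)) (cmp x R)) (cmp y R)"
          if "U5.PC.alg x" "U5.PC.alg y" "U5.PH.alg h" for x y h
          using U5.C1_of_vec[OF C1v] that Ralg by blast
        show "cmp (U5.ra (U5.la (U5.PH.conv g (cmp g B)) y) (U5.PH.iv (cmp g B))) R = U5.ra (cmp y R) (U5.PH.iv (cmp g B))"
          if "U5.PH.alg g" "U5.PC.alg y" for g y
          using U5.C2_of_vec[OF C2v] that Balg by blast
        show "rbpL H (tens_alg (mulv ?G) (mulv ?G)) g h B = rbpR H (tens_alg (mulv ?G) (mulv ?G)) g h B"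
          if "U5.PH.alg g" "U5.PH.alg h" for g h
          by (rule points_from_rb[OF rbB cGG that(1)])
      qed
      then show "rbpL ?G (tens_alg (mulv ?G) (mulv ?G)) (i1 (hone ?G)) (i2 (hone ?G)) ?T =
                 rbpR ?G (tens_alg (mulv ?G) (mulv ?G)) (i1 (hone ?G)) (i2 (hone ?G)) ?T"
        using D1(1) D2(1) by simp
    qed
  qed
qed

end
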